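(* Assume $f$ is in Case 4 and let $r>0$ be sufficiently small. If $d\ge2$ or $T_k<\delta<T_{k-1}$, then $G_z=\alpha G_p$ on $A_f$. If $(n_1,m_1)\neq(0,\delta)$, then $G_f^{\alpha}=\alpha G_p$ on $A_0$.
   Context: Let $f(z,w)=(p(z),q(z,w))$ be a holomorphic skew product defined on $\mathbb{C}^2$ or on $\{|z|<R\}\times\mathbb{C}$, where $R$ is so large that the attracting basin $A_p$ of $p$ at $0$ is relatively compact in $\{|z|<R\}$. Assume $p(z)=az^{\delta}+O(z^{\delta+1})$, $a\neq0$, $\delta\ge2$, and $q(z,w)=\sum_{i,j\ge0}b_{ij}z^iw^j$ with $b_{00}=b_{01}=0$. The Newton polygon $N(q)$ is the convex hull of $\bigcup_{b_{ij}\ne0}\{(x,y):x\ge i,\ y\ge j\}$, with vertices $(n_1,m_1),\dots,(n_s,m_s)$, $n_1<\dots<n_s$, $m_1>\dots>m_s$. For $1\le k\le s-1$, $T_k$ is the $y$-intercept of the line through $(n_k,m_k)$ and $(n_{k+1},m_{k+1})$. Case 4 means $s>2$ and $T_k\le\delta\le T_{k-1}$ for some $2\le k\le s-1$; set $(\gamma,d)=(n_k,m_k)$ (so $\delta>d$), $\alpha=\gamma/(\delta-d)$, $l_1=(n_k-n_{k-1})/(m_{k-1}-m_k)$, $l_1+l_2=(n_{k+1}-n_k)/(m_k-m_{k+1})$. Let $U=\{|z|^{l_1+l_2}<r^{l_2}|w|,\ |w|<r|z|^{l_1}\}$ and $A_f=\bigcup_{n\ge0}f^{-n}(U)$; $A_0$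 is the attracting basin of the origin. With $(z_n,w_n)=f^n(z,w)$: $G_p(z)=\lim_n\delta^{-n}\log|p^n(z)|$, $G_z(w)=\lim_n\delta^{-n}\log|w_n|$, $G_f^{\alpha}(z,w)=\lim_n\delta^{-n}\log\max\{|z_n|^{\alpha},|w_n|\}$; an equality includes existence of the limit. *)

theory Defs
  imports "HOL-Analysis.Analysis"
begin

definition skew :: "(complex \<Rightarrow> complex) \<Rightarrow> (complex \<Rightarrow> complex \<Rightarrow> complex)
    \<Rightarrow> complex \<times> complex \<Rightarrow> complex \<times> complex" where
  "skew p q = (\<lambda>(z, w). (p z, q z w))"

text \<open>Newton polygon of q with Taylor coefficients b i j (of z^i w^j).\<close>
definition newton_polygon :: "(nat \<Rightarrow> nat \<Rightarrow> complex) \<Rightarrow> (real \<times> real) set" where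
  "newton_polygon b = convex hull
     (\<Union>{{(x, y). real i \<le> x \<and> real j \<le> y} | i j. b i j \<noteq> 0})"

text \<open>y-intercept T_k of the line through (n k, m k) and (n (k+1), m (k+1)).\<close>
definition intercept :: "(nat \<Rightarrow> nat) \<Rightarrow> (nat \<Rightarrow> nat) \<Rightarrow> nat \<Rightarrow> real" where
  "intercept n m k = real (m k) + real (n k) * (real (m k) - real (m (Suc k)))
                       / (real (n (Suc k)) - real (n k))"

definition basin_p :: "complex set \<Rightarrow> (complex \<Rightarrow> complex) \<Rightarrow> complex set" where
  "basin_p Dz p = {z \<in> Dz. (\<forall>j. (p ^^ j) z \<in> Dz) \<and> (\<lambda>j. (p ^^ j) z) \<longlonglongrightarrow> 0}"

definition basin0 :: "complex set \<Rightarrow> (complex \<times> complex \<Rightarrow> complex \<times> complex)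
    \<Rightarrow> (complex \<times> complex) set" where
  "basin0 Dz f = {x. (\<forall>j. fst ((f ^^ j) x) \<in> Dz) \<and> (\<lambda>j. (f ^^ j) x) \<longlonglongrightarrow> 0}"

definition Uset :: "real \<Rightarrow> real \<Rightarrow> real \<Rightarrow> (complex \<times> complex) set" where
  "Uset l1 l2 r = {(z, w). cmod z powr (l1 + l2) < r powr l2 * cmod w \<and> cmod w < r * cmod z powr l1}"

definition Af :: "complex set \<Rightarrow> (complex \<times> complex \<Rightarrow> complex \<times> complex)
    \<Rightarrow> (complex \<times> complex) set \<Rightarrow> (complex \<times> complex) set" where
  "Af Dz f U = {x. \<exists>n. (\<forall>j\<le>n. fst ((f ^^ j) x) \<in> Dz) \<and> (f ^^ n) x \<in> U}"

definition eln :: "real \<Rightarrow> ereal" where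
  "eln x = (if x \<le> 0 then -\<infinity> else ereal (ln x))"

text \<open>The sequence delta^{-n} log (u n), whose limit defines the Green functions.\<close>
definition green_seq :: "nat \<Rightarrow> (nat \<Rightarrow> real) \<Rightarrow> nat \<Rightarrow> ereal" where
  "green_seq \<delta> u = (\<lambda>n. ereal (1 / real \<delta> ^ n) * eln (u n))"

end

theory Submission
  imports Defs
begin

lemma np_halfspace:
  assumes c1: "c1 \<ge> 0" and c2: "c2 \<ge> 0"
    and S: "\<And>i j. b i j \<noteq> 0 \<Longrightarrow> c1 * real i + c2 * real j \<ge> \<mu>"
    and P: "(x, y) \<in> newton_polygon b"
  shows "c1 * x + c2 * y \<ge> \<mu>"
proof -
  define H where "H = {p :: real \<times> real. \<mu> \<le> c1 * fst p + c2 * snd p}"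
  have cH: "convex H"
    unfolding H_def convex_def
  proof (clarify)
    fix x1 y1 x2 y2 u v :: real
    assume h: "\<mu> \<le> c1 * fst (x1, y1) + c2 * snd (x1, y1)" "\<mu> \<le> c1 * fst (x2, y2) + c2 * snd (x2, y2)"
      "0 \<le> u" "0 \<le> v" "u + v = 1"
    have "u * \<mu> \<le> u * (c1 * x1 + c2 * y1)" using h by (intro mult_left_mono) auto
    moreover have "v * \<mu> \<le> v * (c1 * x2 + c2 * y2)" using h by (intro mult_left_mono) auto
    ultimately have "(u + v) * \<mu> \<le> u * (c1 * x1 + c2 * y1) + v * (c1 * x2 + c2 * y2)"
      by (simp add: distrib_right)
    then show "\<mu> \<le> c1 * fst (u *\<^sub>R (x1, y1) + v *\<^sub>R (x2, y2)) + c2 * snd (u *\<^sub>R (x1, y1) + v *\<^sub>R (x2, y2))"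
      using h(5) by (simp add: algebra_simps)
  qed
  have sub: "(\<Union>{{(x, y). real i \<le> x \<and> real j \<le> y} | i j. b i j \<noteq> 0}) \<subseteq> H"
  proof
    fix p assume "p \<in> \<Union>{{(x, y). real i \<le> x \<and> real j \<le> y} | i j. b i j \<noteq> 0}"
    then obtain i j where bij: "b i j \<noteq> 0" and p: "real i \<le> fst p" "real j \<le> snd p" by auto
    have "c1 * real i \<le> c1 * fst p" using c1 p by (intro mult_left_mono)
    moreover have "c2 * real j \<le> c2 * snd p" using c2 p by (intro mult_left_mono)
    ultimately show "p \<in> H" using S[OF bij] unfolding H_def by auto
  qed
  have "newton_polygon b \<subseteq> H" unfolding newton_polygon_def
    using hull_minimal[of _ H convex] sub cH by blast
  with P show ?thesis unfolding H_def by auto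
qed

lemma np_shift:
  assumes P: "P \<in> newton_polygon b" and t: "t1 \<ge> 0" "t2 \<ge> 0"
  shows "(t1, t2) + P \<in> newton_polygon b"
proof -
  define U where "U = (\<Union>{{(x, y). real i \<le> x \<and> real j \<le> y} | i j. b i j \<noteq> 0})"
  have "(+) (t1, t2) ` U \<subseteq> U"
  proof
    fix p assume "p \<in> (+) (t1, t2) ` U"
    then obtain x y where xy: "(x,y) \<in> U" and p: "p = (t1 + x, t2 + y)" by auto
    from xy obtain i j where "b i j \<noteq> 0" "real i \<le> x" "real j \<le> y" unfolding U_def by auto
    then show "p \<in> U" unfolding U_def p using t
      by (auto intro!: exI[of _ "{(x, y). real i \<le> x \<and> real j \<le> y}"])
  qed
  hence "convex hull ((+) (t1, t2) ` U) \<subseteq> convex hull U" by (rule hull_mono)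
  hence "(+) (t1, t2) ` (convex hull U) \<subseteq> convex hull U" by (simp add: convex_hull_translation)
  with P show ?thesis unfolding newton_polygon_def U_def[symmetric] by auto
qed

lemma np_corner_in:
  assumes "b i j \<noteq> 0" shows "(real i, real j) \<in> newton_polygon b"
  unfolding newton_polygon_def
  by (rule hull_inc) (use assms in auto)

lemma extreme_corner:
  assumes e: "e extreme_point_of newton_polygon b"
  shows "\<exists>i j. b i j \<noteq> 0 \<and> e = (real i, real j)"
proof -
  define U where "U = (\<Union>{{(x, y). real i \<le> x \<and> real j \<le> y} | i j. b i j \<noteq> 0})"
  have "e \<in> U" using extreme_point_of_convex_hull e unfolding newton_polygon_def U_def by blast
  then obtain i j where bij: "b i j \<noteq> 0" and le: "real i \<le> fst e" "real j \<le> snd e" unfolding U_def by auto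
  define t1 where "t1 = fst e - real i"
  define t2 where "t2 = snd e - real j"
  have t: "t1 \<ge> 0" "t2 \<ge> 0" using le t1_def t2_def by auto
  have c: "(real i, real j) \<in> newton_polygon b" using np_corner_in[of b i j] bij by blast
  show ?thesis
  proof (cases "t1 = 0 \<and> t2 = 0")
    case True
    then have "e = (real i, real j)" using t1_def t2_def by (cases e) auto
    then show ?thesis using bij by blast
  next
    case False
    define a where "a = (t1/2, t2/2) + (real i, real j)"
    define c' where "c' = (3*t1/2, 3*t2/2) + (real i, real j)"
    have a: "a \<in> newton_polygon b" unfolding a_def using np_shift[OF c] t by auto
    have c'N: "c' \<in> newton_polygon b" unfolding c'_def using np_shift[OF c] t by auto
    have "e \<in> open_segment a c'"
      unfolding in_segment(2)
    proof (intro conjI exI[of _ "1/2"])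
      show "a \<noteq> c'" using False unfolding a_def c'_def by auto
      show "e = (1 - 1/2) *\<^sub>R a + (1/2) *\<^sub>R c'" unfolding a_def c'_def t1_def t2_def
        by (cases e) (auto simp: field_simps)
    qed auto
    with e a c'N show ?thesis unfolding extreme_point_of_def by blast
  qed
qed

lemma lexmin_extreme:
  fixes lam :: real
  assumes lam: "lam > 0" and b0: "b i0 j0 \<noteq> 0"
  shows "\<exists>i j. b i j \<noteq> 0 \<and> (real i, real j) extreme_point_of newton_polygon b
     \<and> real i + lam * real j \<le> real i0 + lam * real j0
     \<and> (real i + lam * real j = real i0 + lam * real j0 \<longrightarrow> i \<le> i0)"
proof -
  define \<phi> where "\<phi> = (\<lambda>x::nat\<times>nat. real (fst x) + lam * real (snd x))"
  define \<phi>0 where "\<phi>0 = \<phi> (i0, j0)"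
  define T where "T = {x. b (fst x) (snd x) \<noteq> 0 \<and> \<phi> x \<le> \<phi>0 + 1}"
  define B1 where "B1 = nat \<lceil>\<phi>0 + 1\<rceil>"
  define B2 where "B2 = nat \<lceil>(\<phi>0 + 1) / lam\<rceil>"
  have "T \<subseteq> {..B1} \<times> {..B2}"
  proof
    fix x assume x: "x \<in> T"
    obtain i j where xij: "x = (i, j)" by (cases x)
    have le: "real i + lam * real j \<le> \<phi>0 + 1" using x unfolding T_def \<phi>_def xij by auto
    have "lam * real j \<ge> 0" using lam by auto
    hence "real i \<le> \<phi>0 + 1" using le by linarith
    hence "i \<le> B1" unfolding B1_def by linarith
    moreover have "lam * real j \<le> \<phi>0 + 1" using le by linarith
    hence "real j \<le> (\<phi>0 + 1) / lam" using lam by (simp add: field_simps)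
    hence "j \<le> B2" unfolding B2_def by linarith
    ultimately show "x \<in> {..B1} \<times> {..B2}" using xij by auto
  qed
  hence finT: "finite T" by (rule finite_subset) auto
  have i0T: "(i0, j0) \<in> T" unfolding T_def \<phi>0_def using b0 by auto
  define \<mu> where "\<mu> = Min (\<phi> ` T)"
  have \<mu>le: "\<And>x. x \<in> T \<Longrightarrow> \<mu> \<le> \<phi> x" unfolding \<mu>_def using finT by auto
  have \<mu>in: "\<mu> \<in> \<phi> ` T" unfolding \<mu>_def using finT i0T by (intro Min_in) auto
  define T' where "T' = {x\<in>T. \<phi> x = \<mu>}"
  have finT': "finite T'" using finT unfolding T'_def by auto
  have T'ne: "T' \<noteq> {}" using \<mu>in unfolding T'_def by auto
  define ie where "ie = Min (fst ` T')"
  have "ie \<in> fst ` T'" unfolding ie_def using finT' T'ne by (intro Min_in) auto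
  then obtain e where eT': "e \<in> T'" and fe: "fst e = ie" by auto
  have ie_le: "\<And>x. x \<in> T' \<Longrightarrow> ie \<le> fst x" unfolding ie_def using finT' by auto
  define G where "G = (\<lambda>x. \<phi> x - \<mu>) ` {x\<in>T. \<phi> x > \<mu>} \<union> {1}"
  have finG: "finite G" unfolding G_def using finT by auto
  define g where "g = Min G"
  have gpos: "g > 0" unfolding g_def using finG unfolding G_def by (subst Min_gr_iff) auto
  have g1: "g \<le> 1" unfolding g_def using finG unfolding G_def by (intro Min_le) auto
  have ggap: "\<And>x. x \<in> T \<Longrightarrow> \<phi> x > \<mu> \<Longrightarrow> g \<le> \<phi> x - \<mu>"
    unfolding g_def using finG unfolding G_def by (intro Min_le) auto
  define \<epsilon> where "\<epsilon> = g / (real ie + 1)"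
  have epos: "\<epsilon> > 0" unfolding \<epsilon>_def using gpos by auto
  have eie: "\<epsilon> * real ie < g"
  proof -
    have "\<epsilon> * (real ie + 1) = g" unfolding \<epsilon>_def by simp
    thus ?thesis using epos by (simp add: algebra_simps)
  qed
  have \<mu>\<phi>0: "\<mu> \<le> \<phi>0" using \<mu>le[OF i0T] unfolding \<phi>0_def by simp
  have allS: "\<mu> \<le> \<phi> (i, j) \<and> \<mu> + \<epsilon> * real ie \<le> \<phi> (i, j) + \<epsilon> * real i" if bij: "b i j \<noteq> 0" for i j
  proof (cases "(i, j) \<in> T")
    case True
    note \<mu>le[OF True]
    show ?thesis
    proof (cases "\<phi> (i, j) = \<mu>")
      case True
      hence "(i, j) \<in> T'" using \<open>(i, j) \<in> T\<close> unfolding T'_def by auto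
      hence "ie \<le> i" using ie_le by force
      hence "\<epsilon> * real ie \<le> \<epsilon> * real i" using epos by (intro mult_left_mono) auto
      thus ?thesis using True by auto
    next
      case False
      hence "\<phi> (i, j) > \<mu>" using \<open>\<mu> \<le> \<phi> (i, j)\<close> by auto
      hence "g \<le> \<phi> (i, j) - \<mu>" using ggap \<open>(i, j) \<in> T\<close> by auto
      moreover have "\<epsilon> * real i \<ge> 0" using epos by auto
      ultimately show ?thesis using eie \<open>\<mu> \<le> \<phi> (i, j)\<close> by linarith
    qed
  next
    case False
    hence "\<phi> (i, j) > \<phi>0 + 1" using bij unfolding T_def by auto
    moreover have "\<epsilon> * real i \<ge> 0" using epos by auto
    ultimately show ?thesis using eie g1 \<mu>\<phi>0 by linarith
  qed
  obtain ie' je where eij: "e = (ie', je)" by (cases e)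
  have ie': "ie' = ie" using fe eij by simp
  have be: "b ie je \<noteq> 0" and \<phi>e: "\<phi> (ie, je) = \<mu>" using eT' eij ie' unfolding T'_def T_def by auto
  define E where "E = (real ie, real je)"
  have EN: "E \<in> newton_polygon b" unfolding E_def using np_corner_in[of b ie je] be by blast
  have H1: "\<mu> \<le> 1 * x + lam * y" if "(x, y) \<in> newton_polygon b" for x y
    by (rule np_halfspace[OF _ _ _ that]) (use lam allS in \<open>auto simp: \<phi>_def\<close>)
  have H2: "\<mu> + \<epsilon> * real ie \<le> (1 + \<epsilon>) * x + lam * y" if "(x, y) \<in> newton_polygon b" for x y
    by (rule np_halfspace[OF _ _ _ that]) (use lam allS epos in \<open>auto simp: \<phi>_def algebra_simps\<close>)
  have ext: "E extreme_point_of newton_polygon b"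
    unfolding extreme_point_of_def
  proof (intro conjI EN ballI)
    fix a c assume aN: "a \<in> newton_polygon b" and cN: "c \<in> newton_polygon b"
    show "E \<notin> open_segment a c"
    proof
      assume "E \<in> open_segment a c"
      then obtain u where ac: "a \<noteq> c" and u: "0 < u" "u < 1" and Eu: "E = (1 - u) *\<^sub>R a + u *\<^sub>R c"
        unfolding in_segment(2) by auto
      obtain x1 y1 where a: "a = (x1, y1)" by (cases a)
      obtain x2 y2 where c: "c = (x2, y2)" by (cases c)
      have ex: "real ie = (1 - u) * x1 + u * x2" and ey: "real je = (1 - u) * y1 + u * y2"
        using Eu unfolding E_def a c by auto
      have p1: "\<mu> \<le> x1 + lam * y1" using H1[of x1 y1] aN a by auto
      have p2: "\<mu> \<le> x2 + lam * y2" using H1[of x2 y2] cN c by auto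
      have q1: "\<mu> + \<epsilon> * real ie \<le> (1 + \<epsilon>) * x1 + lam * y1" using H2[of x1 y1] aN a by auto
      have q2: "\<mu> + \<epsilon> * real ie \<le> (1 + \<epsilon>) * x2 + lam * y2" using H2[of x2 y2] cN c by auto
      have emu: "real ie + lam * real je = \<mu>" using \<phi>e unfolding \<phi>_def by simp
      have comb: "(1 - u) * (x1 + lam * y1) + u * (x2 + lam * y2) = \<mu>"
        using emu ex ey by (simp add: algebra_simps)
      have "(1 - u) * (x1 + lam * y1) \<ge> (1 - u) * \<mu>" using p1 u by (intro mult_left_mono) auto
      moreover have "u * (x2 + lam * y2) \<ge> u * \<mu>" using p2 u by (intro mult_left_mono) auto
      ultimately have "(1 - u) * (x1 + lam * y1) = (1 - u) * \<mu>" "u * (x2 + lam * y2) = u * \<mu>"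
        using comb by (simp_all add: algebra_simps)
      hence f1: "x1 + lam * y1 = \<mu>" and f2: "x2 + lam * y2 = \<mu>" using u by auto
      have "\<epsilon> * real ie \<le> \<epsilon> * x1" using q1 f1 by (simp add: algebra_simps)
      hence r1: "real ie \<le> x1" using epos by simp
      have "\<epsilon> * real ie \<le> \<epsilon> * x2" using q2 f2 by (simp add: algebra_simps)
      hence r2: "real ie \<le> x2" using epos by simp
      have "(1 - u) * x1 \<ge> (1 - u) * real ie" using r1 u by (intro mult_left_mono) auto
      moreover have "u * x2 \<ge> u * real ie" using r2 u by (intro mult_left_mono) auto
      moreover have "(1 - u) * x1 + u * x2 = (1 - u) * real ie + u * real ie" using ex by (simp add: algebra_simps)
      ultimately have "(1 - u) * x1 = (1 - u) * real ie" "u * x2 = u * real ie" by linarith+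
      hence "x1 = real ie" "x2 = real ie" using u by auto
      hence "y1 = y2" using f1 f2 lam by auto
      thus False using ac \<open>x1 = real ie\<close> \<open>x2 = real ie\<close> a c by auto
    qed
  qed
  show ?thesis
  proof (intro exI conjI)
    show "b ie je \<noteq> 0" by (rule be)
    show "(real ie, real je) extreme_point_of newton_polygon b" using ext unfolding E_def .
    show "real ie + lam * real je \<le> real i0 + lam * real j0" using \<phi>e \<mu>\<phi>0 unfolding \<phi>_def \<phi>0_def by simp
    show "real ie + lam * real je = real i0 + lam * real j0 \<longrightarrow> ie \<le> i0"
    proof
      assume "real ie + lam * real je = real i0 + lam * real j0"
      hence "(i0, j0) \<in> T'" using \<phi>e i0T unfolding T'_def \<phi>_def by auto
      thus "ie \<le> i0" using ie_le by force
    qed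
  qed
qed

locale npv =
  fixes b :: "nat \<Rightarrow> nat \<Rightarrow> complex" and s :: nat and n m :: "nat \<Rightarrow> nat"
  assumes vertices: "{(real (n i), real (m i)) | i. i \<in> {1..s}} = {x. x extreme_point_of newton_polygon b}"
    and n_incr: "strict_mono_on {1..s} n"
    and m_decr: "\<forall>i\<in>{1..s}. \<forall>j\<in>{1..s}. i < j \<longrightarrow> m j < m i"
begin

definition lam :: "nat \<Rightarrow> real" where
  "lam i = (real (n (Suc i)) - real (n i)) / (real (m i) - real (m (Suc i)))"

lemma vert_ext: "i \<in> {1..s} \<Longrightarrow> (real (n i), real (m i)) extreme_point_of newton_polygon b"
  using vertices by blast

lemma ext_vert: "e extreme_point_of newton_polygon b \<Longrightarrow> \<exists>i\<in>{1..s}. e = (real (n i), real (m i))"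
  using vertices by blast

lemma vert_in: "i \<in> {1..s} \<Longrightarrow> (real (n i), real (m i)) \<in> newton_polygon b"
  using vert_ext unfolding extreme_point_of_def by blast

lemma vert_b: "i \<in> {1..s} \<Longrightarrow> b (n i) (m i) \<noteq> 0"
  using extreme_corner[OF vert_ext] by fastforce

lemma n_lt: "i \<in> {1..s} \<Longrightarrow> j \<in> {1..s} \<Longrightarrow> i < j \<Longrightarrow> n i < n j"
  using n_incr unfolding strict_mono_on_def by blast

lemma m_lt: "i \<in> {1..s} \<Longrightarrow> j \<in> {1..s} \<Longrightarrow> i < j \<Longrightarrow> m j < m i"
  using m_decr by blast

lemma lam_pos: assumes "1 \<le> i" "Suc i \<le> s" shows "lam i > 0"
proof -
  have "n i < n (Suc i)" "m (Suc i) < m i" using n_lt m_lt assms by auto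
  thus ?thesis unfolding lam_def by (auto intro!: divide_pos_pos)
qed

lemma chain:
  assumes i: "1 \<le> i" "Suc (Suc i) \<le> s"
  shows "lam i < lam (Suc i)"
proof (rule ccontr)
  assume "\<not> lam i < lam (Suc i)"
  hence ge: "lam (Suc i) \<le> lam i" by simp
  define dx1 where "dx1 = real (n (Suc i)) - real (n i)"
  define dy1 where "dy1 = real (m i) - real (m (Suc i))"
  define dx2 where "dx2 = real (n (Suc (Suc i))) - real (n (Suc i))"
  define dy2 where "dy2 = real (m (Suc i)) - real (m (Suc (Suc i)))"
  have pos: "dx1 > 0" "dy1 > 0" "dx2 > 0" "dy2 > 0"
    unfolding dx1_def dy1_def dx2_def dy2_def using n_lt m_lt i by auto
  have "dx2 / dy2 \<le> dx1 / dy1" using ge unfolding lam_def dx1_def dy1_def dx2_def dy2_def by simp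
  hence cross: "dx2 * dy1 \<le> dx1 * dy2" using pos by (simp add: divide_simps)
  define \<tau> where "\<tau> = dx1 / (dx1 + dx2)"
  have \<tau>: "0 < \<tau>" "\<tau> < 1" unfolding \<tau>_def using pos by auto
  define A where "A = (real (n i), real (m i))"
  define B where "B = (real (n (Suc i)), real (m (Suc i)))"
  define C where "C = (real (n (Suc (Suc i))), real (m (Suc (Suc i))))"
  have AN: "A \<in> newton_polygon b" unfolding A_def using vert_in i by auto
  have CN: "C \<in> newton_polygon b" unfolding C_def using vert_in i by auto
  have Bext: "B extreme_point_of newton_polygon b" unfolding B_def using vert_ext i by auto
  define c where "c = (1 - \<tau>) *\<^sub>R A + \<tau> *\<^sub>R C"
  have cvx: "convex (newton_polygon b)" unfolding newton_polygon_def by simp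
  have cN: "c \<in> newton_polygon b" unfolding c_def
    using convexD[OF cvx AN CN, of "1 - \<tau>" \<tau>] \<tau> by auto
  have cx: "fst c = real (n (Suc i))"
  proof -
    have "fst c = real (n i) + \<tau> * (dx1 + dx2)" unfolding c_def A_def C_def dx1_def dx2_def
      by (simp add: algebra_simps)
    also have "\<tau> * (dx1 + dx2) = dx1" unfolding \<tau>_def using pos by simp
    finally show ?thesis unfolding dx1_def by simp
  qed
  have cy: "snd c = real (m i) - \<tau> * (dy1 + dy2)" unfolding c_def A_def C_def dy1_def dy2_def
    by (simp add: algebra_simps)
  have "\<tau> * (dy1 + dy2) \<ge> dy1"
  proof -
    have "dy1 * (dx1 + dx2) \<le> dx1 * (dy1 + dy2)" using cross by (simp add: algebra_simps)
    thus ?thesis unfolding \<tau>_def using pos by (simp add: field_simps)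
  qed
  hence cyle: "snd c \<le> real (m (Suc i))" using cy unfolding dy1_def by simp
  define t where "t = real (m (Suc i)) - snd c"
  have t0: "t \<ge> 0" unfolding t_def using cyle by simp
  show False
  proof (cases "t = 0")
    case True
    have "B = c" using True cx unfolding t_def B_def by (cases c) auto
    moreover have "A \<noteq> C" unfolding A_def C_def using n_lt[of i "Suc (Suc i)"] i by auto
    ultimately have "B \<in> open_segment A C" unfolding in_segment(2) c_def using \<tau> by auto
    thus False using Bext AN CN unfolding extreme_point_of_def by blast
  next
    case False
    define c' where "c' = (0, 2 * t) + c"
    have c'N: "c' \<in> newton_polygon b" unfolding c'_def using np_shift[OF cN] t0 by auto
    have "B \<in> open_segment c c'"
      unfolding in_segment(2)
    proof (intro conjI exI[of _ "1/2"])
      show "c \<noteq> c'" unfolding c'_def using False by (cases c) auto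
      show "B = (1 - 1/2) *\<^sub>R c + (1/2) *\<^sub>R c'" unfolding c'_def B_def t_def using cx
        by (cases c) (auto simp: field_simps)
    qed auto
    thus False using Bext cN c'N unfolding extreme_point_of_def by blast
  qed
qed

lemma lam_mono:
  assumes "1 \<le> i" "i \<le> j" "Suc j \<le> s"
  shows "lam i \<le> lam j"
  using assms(2,3)
proof (induction j rule: dec_induct)
  case base thus ?case by simp
next
  case (step j)
  have "lam j < lam (Suc j)" using chain[of j] assms step by auto
  thus ?case using step by auto
qed

lemma phi_vertex:
  assumes k: "2 \<le> k" "Suc k \<le> s" and l: "lam (k - 1) \<le> l" "l \<le> lam k"
    and i: "i \<in> {1..s}"
  shows "real (n i) + l * real (m i) \<ge> real (n k) + l * real (m k)"
proof -
  define \<phi> where "\<phi> j = real (n j) + l * real (m j)" for j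
  have dphi: "\<phi> (Suc j) - \<phi> j = (real (m j) - real (m (Suc j))) * (lam j - l)"
    if "1 \<le> j" "Suc j \<le> s" for j
  proof -
    have "real (m j) - real (m (Suc j)) > 0" using m_lt that by auto
    thus ?thesis unfolding \<phi>_def lam_def by (simp add: field_simps)
  qed
  show ?thesis
  proof (cases "k \<le> i")
    case True
    have "\<phi> k \<le> \<phi> i" using True i
    proof (induction i rule: dec_induct)
      case base thus ?case by simp
    next
      case (step j)
      have "lam k \<le> lam j" using lam_mono[of k j] step k by auto
      moreover have "real (m j) - real (m (Suc j)) > 0" using m_lt step k by auto
      moreover have "\<phi> (Suc j) - \<phi> j = (real (m j) - real (m (Suc j))) * (lam j - l)"
        using dphi[of j] step k by auto
      ultimately have "\<phi> (Suc j) - \<phi> j \<ge> 0" using l by auto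
      thus ?case using step k by auto
    qed
    thus ?thesis unfolding \<phi>_def .
  next
    case False
    have ik: "i \<le> k" using False by simp
    have "\<phi> k \<le> \<phi> i" using ik i
    proof (induction i rule: inc_induct)
      case base thus ?case by simp
    next
      case (step j)
      have "lam j \<le> lam (k - 1)" using lam_mono[of j "k - 1"] step k by auto
      moreover have "real (m j) - real (m (Suc j)) > 0" using m_lt step k by auto
      moreover have "\<phi> (Suc j) - \<phi> j = (real (m j) - real (m (Suc j))) * (lam j - l)"
        using dphi[of j] step k by auto
      ultimately have "\<phi> (Suc j) - \<phi> j \<le> 0" using l by (simp add: mult_nonneg_nonpos)
      moreover have "Suc j \<le> s" using step k by auto
      ultimately show ?case using step by auto
    qed
    thus ?thesis unfolding \<phi>_def .
  qed
qed

lemma NP: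
  assumes k: "2 \<le> k" "Suc k \<le> s" and l: "lam (k - 1) \<le> l" "l \<le> lam k" and bij: "b i j \<noteq> 0"
  shows "real i + l * real j \<ge> real (n k) + l * real (m k)"
proof (rule ccontr)
  assume "\<not> ?thesis"
  hence lt: "real i + l * real j < real (n k) + l * real (m k)" by simp
  have "lam (k - 1) > 0" using lam_pos[of "k - 1"] k by auto
  hence lpos: "l > 0" using l by auto
  obtain i' j' where b': "b i' j' \<noteq> 0" and ext: "(real i', real j') extreme_point_of newton_polygon b"
    and le: "real i' + l * real j' \<le> real i + l * real j"
    using lexmin_extreme[of l b i j, OF lpos bij] by blast
  obtain t where t: "t \<in> {1..s}" and et: "(real i', real j') = (real (n t), real (m t))"
    using ext_vert[OF ext] by blast
  have "real (n t) + l * real (m t) \<ge> real (n k) + l * real (m k)"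
    by (rule phi_vertex[OF k l t])
  thus False using et le lt by auto
qed

lemma NP2:
  assumes k: "2 \<le> k" "Suc k \<le> s" and l: "lam (k - 1) \<le> l" "l \<le> lam k" and b0: "b 0 j \<noteq> 0"
    and le: "l * real j \<le> real (n k) + l * real (m k)"
  shows "n 1 = 0 \<and> m 1 = j"
proof -
  have "lam (k - 1) > 0" using lam_pos[of "k - 1"] k by auto
  hence lpos: "l > 0" using l by auto
  obtain i' j' where b': "b i' j' \<noteq> 0" and ext: "(real i', real j') extreme_point_of newton_polygon b"
    and le1: "real i' + l * real j' \<le> real 0 + l * real j"
    and eq: "real i' + l * real j' = real 0 + l * real j \<longrightarrow> i' \<le> 0"
    using lexmin_extreme[of l b 0 j, OF lpos b0] by blast
  obtain t where t: "t \<in> {1..s}" and et: "(real i', real j') = (real (n t), real (m t))"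
    using ext_vert[OF ext] by blast
  have "real (n t) + l * real (m t) \<ge> real (n k) + l * real (m k)"
    by (rule phi_vertex[OF k l t])
  hence "real i' + l * real j' = real 0 + l * real j" using le le1 et by auto
  hence i'0: "i' = 0" using eq by auto
  hence "l * real j' = l * real j" using \<open>real i' + l * real j' = real 0 + l * real j\<close> by simp
  hence jj: "j' = j" using lpos by simp
  have nt: "n t = 0" "m t = j" using et i'0 jj by auto
  have "t = 1"
  proof (rule ccontr)
    assume "t \<noteq> 1"
    hence "1 < t" using t by auto
    hence "n 1 < n t" using n_lt[of 1 t] t by auto
    thus False using nt by auto
  qed
  thus ?thesis using nt by auto
qed

end

lemma contract_tendsto:
  fixes D e :: "nat \<Rightarrow> real"
  assumes D0: "\<And>n. 0 \<le> D n" and rec: "\<And>n. D (Suc n) \<le> \<rho> * D n + e n"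
    and e: "e \<longlonglongrightarrow> 0" and \<rho>: "0 \<le> \<rho>" "\<rho> < 1"
  shows "D \<longlonglongrightarrow> 0"
proof (rule LIMSEQ_I)
  fix r :: real assume r: "0 < r"
  have "r * (1 - \<rho>) / 2 > 0" using r \<rho> by auto
  then obtain N where N: "\<And>n. n \<ge> N \<Longrightarrow> norm (e n) < r * (1 - \<rho>) / 2"
    using LIMSEQ_D[OF e] by (metis diff_zero)
  define F where "F n = D n - r / 2" for n
  have Fstep: "F (Suc n) \<le> \<rho> * F n" if "n \<ge> N" for n
  proof -
    have "e n \<le> r * (1 - \<rho>) / 2" using N[OF that] by auto
    thus ?thesis using rec[of n] unfolding F_def by (simp add: algebra_simps)
  qed
  have Fm: "F (N + m) \<le> \<rho> ^ m * \<bar>F N\<bar>" for m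
  proof (induction m)
    case 0 thus ?case by simp
  next
    case (Suc m)
    have "F (N + Suc m) \<le> \<rho> * F (N + m)" using Fstep[of "N + m"] by simp
    also have "\<dots> \<le> \<rho> * (\<rho> ^ m * \<bar>F N\<bar>)" using Suc \<rho> by (intro mult_left_mono) auto
    finally show ?case by simp
  qed
  have "(\<lambda>m. \<rho> ^ m * \<bar>F N\<bar>) \<longlonglongrightarrow> 0 * \<bar>F N\<bar>"
    using \<rho> by (intro tendsto_mult LIMSEQ_power_zero) auto
  hence "(\<lambda>m. \<rho> ^ m * \<bar>F N\<bar>) \<longlonglongrightarrow> 0" by simp
  then obtain M where M: "\<And>m. m \<ge> M \<Longrightarrow> norm (\<rho> ^ m * \<bar>F N\<bar>) < r / 2"
    using LIMSEQ_D[of _ 0 "r/2"] r by (metis diff_zero half_gt_zero)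
  show "\<exists>no. \<forall>n\<ge>no. norm (D n - 0) < r"
  proof (intro exI allI impI)
    fix n assume n: "n \<ge> N + M"
    define m where "m = n - N"
    have nm: "n = N + m" and mM: "m \<ge> M" using n unfolding m_def by auto
    have "F n \<le> \<rho> ^ m * \<bar>F N\<bar>" using Fm nm by simp
    also have "\<dots> < r / 2" using M[OF mM] by auto
    finally have "D n < r" unfolding F_def by simp
    thus "norm (D n - 0) < r" using D0[of n] by simp
  qed
qed

lemma linrec_tendsto:
  fixes x :: "nat \<Rightarrow> real"
  assumes c: "\<bar>c\<bar> < 1" and lim: "(\<lambda>n. x (Suc n) - c * x n) \<longlonglongrightarrow> y"
  shows "x \<longlonglongrightarrow> y / (1 - c)"
proof -
  define L where "L = y / (1 - c)"
  have c1: "1 - c \<noteq> 0" using c by auto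
  have "L * (1 - c) = y" unfolding L_def using c1 by simp
  hence L: "L - c * L = y" by (simp add: algebra_simps)
  define D where "D n = \<bar>x n - L\<bar>" for n
  define e where "e n = \<bar>(x (Suc n) - c * x n) - y\<bar>" for n
  have e: "e \<longlonglongrightarrow> 0" unfolding e_def using lim
    by (metis LIM_zero tendsto_rabs_zero)
  have rec: "D (Suc n) \<le> \<bar>c\<bar> * D n + e n" for n
  proof -
    have "x (Suc n) - L = c * (x n - L) + ((x (Suc n) - c * x n) - y)" using L by (simp add: algebra_simps)
    hence "\<bar>x (Suc n) - L\<bar> \<le> \<bar>c * (x n - L)\<bar> + \<bar>(x (Suc n) - c * x n) - y\<bar>" by linarith
    thus ?thesis unfolding D_def e_def by (simp add: abs_mult)
  qed
  have "D \<longlonglongrightarrow> 0" by (rule contract_tendsto[OF _ rec e]) (use c in \<open>auto simp: D_def\<close>)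
  hence "(\<lambda>n. x n - L) \<longlonglongrightarrow> 0" unfolding D_def by (simp add: tendsto_rabs_zero_iff)
  thus ?thesis unfolding L_def[symmetric] by (simp add: LIM_zero_iff)
qed

lemma green_conv:
  fixes x :: "nat \<Rightarrow> real" and \<delta> E :: real
  assumes d: "\<delta> > 1" and b: "\<And>n. \<bar>x (Suc n) - \<delta> * x n\<bar> \<le> E"
  shows "convergent (\<lambda>n. x n / \<delta> ^ n)"
proof -
  define y where "y n = x n / \<delta> ^ n" for n
  define f where "f n = y (Suc n) - y n" for n
  have f: "\<bar>f n\<bar> \<le> E * (1 / \<delta>) ^ Suc n" for n
  proof -
    have "f n = (x (Suc n) - \<delta> * x n) / \<delta> ^ Suc n" unfolding f_def y_def using d
      by (simp add: field_simps)
    hence "\<bar>f n\<bar> = \<bar>x (Suc n) - \<delta> * x n\<bar> / \<delta> ^ Suc n" using d by (simp add: abs_divide)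
    also have "\<dots> \<le> E / \<delta> ^ Suc n" using b[of n] d by (intro divide_right_mono) auto
    finally show ?thesis by (simp add: power_one_over divide_inverse power_inverse)
  qed
  have "summable (\<lambda>n. E * (1 / \<delta>) ^ Suc n)"
    using d by (intro summable_mult summable_Suc_iff[THEN iffD2] summable_geometric) auto
  hence sf: "summable f" by (rule summable_comparison_test'[of _ 0]) (use f in simp)
  have "(\<lambda>n. \<Sum>i<n. f i) \<longlonglongrightarrow> suminf f" by (rule summable_LIMSEQ[OF sf])
  hence "(\<lambda>n. y 0 + (\<Sum>i<n. f i)) \<longlonglongrightarrow> y 0 + suminf f" by (intro tendsto_add) auto
  moreover have "y 0 + (\<Sum>i<n. f i) = y n" for n unfolding f_def by (simp add: sum_lessThan_telescope)
  ultimately have "y \<longlonglongrightarrow> y 0 + suminf f" by simp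
  thus ?thesis unfolding convergent_def y_def by (rule exI)
qed

lemma green_pos:
  assumes "u k > 0" "\<delta> > 0"
  shows "green_seq \<delta> u k = ereal (ln (u k) / real \<delta> ^ k)"
  using assms unfolding green_seq_def eln_def by simp

lemma green_zero:
  assumes "u k = 0" "\<delta> > 0"
  shows "green_seq \<delta> u k = -\<infinity>"
  using assms unfolding green_seq_def eln_def by simp

lemma green_real:
  assumes pos: "\<And>k. u k > 0" and d: "\<delta> > 0"
    and lim: "(\<lambda>k. ln (u k) / real \<delta> ^ k) \<longlonglongrightarrow> L"
  shows "green_seq \<delta> u \<longlonglongrightarrow> ereal L"
proof -
  have "(\<lambda>k. ereal (ln (u k) / real \<delta> ^ k)) \<longlonglongrightarrow> ereal L" using lim by auto
  moreover have "(\<lambda>k. ereal (ln (u k) / real \<delta> ^ k)) = green_seq \<delta> u"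
    using green_pos[OF pos d] by auto
  ultimately show ?thesis by simp
qed

lemma green_shift:
  assumes d: "\<delta> > 0" and lim: "green_seq \<delta> (\<lambda>k. u (k + N)) \<longlonglongrightarrow> L"
  shows "green_seq \<delta> u \<longlonglongrightarrow> ereal (1 / real \<delta> ^ N) * L"
proof -
  have eq: "green_seq \<delta> u (k + N) = ereal (1 / real \<delta> ^ N) * green_seq \<delta> (\<lambda>k. u (k + N)) k" for k
  proof -
    have "ereal (1 / real \<delta> ^ (k + N)) = ereal (1 / real \<delta> ^ N) * ereal (1 / real \<delta> ^ k)"
      by (simp add: power_add)
    thus ?thesis unfolding green_seq_def by (metis mult.assoc)
  qed
  have "(\<lambda>k. ereal (1 / real \<delta> ^ N) * green_seq \<delta> (\<lambda>k. u (k + N)) k) \<longlonglongrightarrow> ereal (1 / real \<delta> ^ N) * L"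
    by (rule tendsto_cmult_ereal[OF _ lim]) simp
  hence "(\<lambda>k. green_seq \<delta> u (k + N)) \<longlonglongrightarrow> ereal (1 / real \<delta> ^ N) * L" using eq by simp
  thus ?thesis by (rule LIMSEQ_offset)
qed

lemma bdd_div_pow:
  fixes f :: "nat \<Rightarrow> real"
  assumes b: "\<And>n. \<bar>f n\<bar> \<le> E" and d: "\<delta> > 1"
  shows "(\<lambda>n. f n / \<delta> ^ n) \<longlonglongrightarrow> 0"
proof (rule Lim_null_comparison)
  show "\<forall>\<^sub>F n in sequentially. norm (f n / \<delta> ^ n) \<le> E * (1 / \<delta>) ^ n"
  proof (intro always_eventually allI)
    fix n
    have "norm (f n / \<delta> ^ n) = \<bar>f n\<bar> / \<delta> ^ n" using d by (simp add: abs_divide)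
    also have "\<dots> \<le> E / \<delta> ^ n" using b[of n] d by (intro divide_right_mono) auto
    finally show "norm (f n / \<delta> ^ n) \<le> E * (1 / \<delta>) ^ n" by (simp add: power_one_over)
  qed
  show "(\<lambda>n. E * (1 / \<delta>) ^ n) \<longlonglongrightarrow> 0"
    using d by (intro tendsto_mult_right_zero LIMSEQ_power_zero) auto
qed

lemma log_step:
  assumes "x > 0" "c1 > 0" "c1 * x ^ k \<le> y" "y \<le> c2 * x ^ k"
  shows "\<bar>ln y - real k * ln x\<bar> \<le> \<bar>ln c1\<bar> + \<bar>ln c2\<bar>"
proof -
  have y: "y > 0" using assms by (smt (verit) mult_pos_pos zero_less_power)
  have c2: "c2 > 0" using assms y by (smt (verit) mult_nonpos_nonneg zero_le_power)
  have "ln (c1 * x ^ k) \<le> ln y" using assms y by (subst ln_le_cancel_iff) auto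
  moreover have "ln y \<le> ln (c2 * x ^ k)" using assms y c2 by (subst ln_le_cancel_iff) auto
  ultimately have "ln c1 + real k * ln x \<le> ln y" "ln y \<le> ln c2 + real k * ln x"
    using assms c2 by (simp_all add: ln_mult ln_realpow)
  thus ?thesis by linarith
qed

lemma part1_seq:
  fixes Zs Ws :: "nat \<Rightarrow> real" and \<delta> \<gamma> d :: nat
  assumes Zp: "\<And>n. Zs n > 0" and Wp: "\<And>n. Ws n > 0"
    and c: "c1 > 0" "e1 > 0"
    and Z1: "\<And>n. c1 * Zs n ^ \<delta> \<le> Zs (Suc n)" and Z2: "\<And>n. Zs (Suc n) \<le> c2 * Zs n ^ \<delta>"
    and W1: "\<And>n. e1 * (Zs n ^ \<gamma> * Ws n ^ d) \<le> Ws (Suc n)"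
    and W2: "\<And>n. Ws (Suc n) \<le> e2 * (Zs n ^ \<gamma> * Ws n ^ d)"
    and d\<delta>: "d < \<delta>" and \<delta>2: "\<delta> \<ge> 2"
  shows "\<exists>g. (\<lambda>n. ln (Zs n) / real \<delta> ^ n) \<longlonglongrightarrow> g \<and>
             (\<lambda>n. ln (Ws n) / real \<delta> ^ n) \<longlonglongrightarrow> real \<gamma> / (real \<delta> - real d) * g"
proof -
  have d1: "real \<delta> > 1" using \<delta>2 by linarith
  define x where "x n = ln (Zs n)" for n
  define y where "y n = ln (Ws n)" for n
  have xs: "\<bar>x (Suc n) - real \<delta> * x n\<bar> \<le> \<bar>ln c1\<bar> + \<bar>ln c2\<bar>" for n
    unfolding x_def using log_step[OF Zp c(1) Z1 Z2] by simp
  have "convergent (\<lambda>n. x n / real \<delta> ^ n)" by (rule green_conv[of "real \<delta>" x, OF d1 xs])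
  then obtain g where A: "(\<lambda>n. x n / real \<delta> ^ n) \<longlonglongrightarrow> g" unfolding convergent_def by blast
  have ZW: "Zs n ^ \<gamma> * Ws n ^ d > 0" for n using Zp Wp by auto
  have ys: "\<bar>y (Suc n) - (real \<gamma> * x n + real d * y n)\<bar> \<le> \<bar>ln e1\<bar> + \<bar>ln e2\<bar>" for n
  proof -
    have "\<bar>ln (Ws (Suc n)) - real 1 * ln (Zs n ^ \<gamma> * Ws n ^ d)\<bar> \<le> \<bar>ln e1\<bar> + \<bar>ln e2\<bar>"
      using log_step[of "Zs n ^ \<gamma> * Ws n ^ d" e1 1 "Ws (Suc n)" e2] ZW c W1 W2 by simp
    moreover have "ln (Zs n ^ \<gamma> * Ws n ^ d) = real \<gamma> * x n + real d * y n"
      unfolding x_def y_def using Zp[of n] Wp[of n] by (simp add: ln_mult ln_realpow)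
    ultimately show ?thesis unfolding y_def by simp
  qed
  define err where "err n = y (Suc n) - (real \<gamma> * x n + real d * y n)" for n
  have "(\<lambda>n. err n / real \<delta> ^ n) \<longlonglongrightarrow> 0"
    by (rule bdd_div_pow[OF _ d1]) (use ys in \<open>auto simp: err_def\<close>)
  hence e0: "(\<lambda>n. err n / real \<delta> ^ n / real \<delta>) \<longlonglongrightarrow> 0 / real \<delta>" using d1 by (intro tendsto_divide) auto
  have "(\<lambda>n. real \<gamma> / real \<delta> * (x n / real \<delta> ^ n) + err n / real \<delta> ^ n / real \<delta>) \<longlonglongrightarrow>
        real \<gamma> / real \<delta> * g + 0 / real \<delta>"
    by (intro tendsto_add tendsto_mult e0 A tendsto_const)
  moreover have "y (Suc n) / real \<delta> ^ Suc n - real d / real \<delta> * (y n / real \<delta> ^ n) =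
        real \<gamma> / real \<delta> * (x n / real \<delta> ^ n) + err n / real \<delta> ^ n / real \<delta>" for n
    unfolding err_def using d1 by (simp add: field_simps)
  ultimately have lim: "(\<lambda>n. y (Suc n) / real \<delta> ^ Suc n - real d / real \<delta> * (y n / real \<delta> ^ n)) \<longlonglongrightarrow>
        real \<gamma> / real \<delta> * g" by simp
  have cd: "\<bar>real d / real \<delta>\<bar> < 1" using d\<delta> d1 by (simp add: divide_simps)
  have "(\<lambda>n. y n / real \<delta> ^ n) \<longlonglongrightarrow> (real \<gamma> / real \<delta> * g) / (1 - real d / real \<delta>)"
    by (rule linrec_tendsto[OF cd, of "\<lambda>n. y n / real \<delta> ^ n"]) (use lim in simp)
  moreover have "(real \<gamma> / real \<delta> * g) / (1 - real d / real \<delta>) = real \<gamma> / (real \<delta> - real d) * g"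
    using d1 d\<delta> by (simp add: field_simps)
  ultimately show ?thesis using A unfolding x_def y_def by auto
qed

lemma part2_caseB:
  fixes Zs Ws :: "nat \<Rightarrow> real" and \<delta> :: nat and \<alpha> c2 K :: real
  assumes Z0: "\<And>n. Zs n = 0" and Wn: "\<And>n. Ws n \<ge> 0"
    and c: "c2 > 0" "K \<ge> 0" "\<alpha> > 0" and \<delta>2: "\<delta> \<ge> 2"
    and Q: "\<And>n. max (Zs n powr \<alpha>) (Ws n) > 0 \<Longrightarrow> Ws (Suc n) \<le> K * (Zs n * max (Zs n powr \<alpha>) (Ws n) powr (real \<delta> - 1/\<alpha>) + max (Zs n powr \<alpha>) (Ws n) powr (real \<delta> + 1))"
    and Q0: "\<And>n. max (Zs n powr \<alpha>) (Ws n) = 0 \<Longrightarrow> Ws (Suc n) = 0"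
    and small0: "max (Zs 0 powr \<alpha>) (Ws 0) \<le> exp (- ln (2*K + c2 powr \<alpha> + 1) - 1)"
  shows "green_seq \<delta> Zs \<longlonglongrightarrow> -\<infinity> \<and> green_seq \<delta> (\<lambda>n. max (Zs n powr \<alpha>) (Ws n)) \<longlonglongrightarrow> -\<infinity>"
proof
  have dpos: "\<delta> > 0" using \<delta>2 by auto
  have "green_seq \<delta> Zs = (\<lambda>_. -\<infinity>)" using green_zero[of Zs _ \<delta>] Z0 dpos by auto
  thus "green_seq \<delta> Zs \<longlonglongrightarrow> -\<infinity>" by simp
  have M: "max (Zs n powr \<alpha>) (Ws n) = Ws n" for n using Z0 Wn by simp
  define K' where "K' = 2*K + c2 powr \<alpha> + 1"
  define \<kappa> where "\<kappa> = ln K'"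
  have K'1: "K' \<ge> 1" "K' \<ge> K" unfolding K'_def using c by auto
  have \<kappa>0: "\<kappa> \<ge> 0" unfolding \<kappa>_def using K'1 by simp
  have W0: "Ws 0 \<le> exp (- \<kappa> - 1)" using small0 M unfolding \<kappa>_def K'_def by simp
  show "green_seq \<delta> (\<lambda>n. max (Zs n powr \<alpha>) (Ws n)) \<longlonglongrightarrow> -\<infinity>"
  proof (cases "\<exists>n0. Ws n0 = 0")
    case True
    then obtain n0 where n0: "Ws n0 = 0" by blast
    have "Ws n = 0" if "n \<ge> n0" for n using that
    proof (induction n rule: dec_induct)
      case base thus ?case by (rule n0)
    next
      case (step n) thus ?case using Q0[of n] M Z0 by simp
    qed
    hence "\<forall>\<^sub>F n in sequentially. green_seq \<delta> (\<lambda>n. max (Zs n powr \<alpha>) (Ws n)) n = -\<infinity>"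
      unfolding eventually_sequentially using green_zero[of "\<lambda>n. max (Zs n powr \<alpha>) (Ws n)" _ \<delta>] M dpos by auto
    thus ?thesis by (rule tendsto_eventually)
  next
    case False
    hence Wp: "Ws n > 0" for n using Wn[of n] by (metis less_eq_real_def)
    define u where "u n = ln (Ws n)" for n
    have ustep: "u (Suc n) \<le> \<kappa> + (real \<delta> + 1) * u n" for n
    proof -
      have "Ws (Suc n) \<le> K * (Ws n powr (real \<delta> + 1))" using Q[of n] M Wp Z0 by simp
      also have "\<dots> \<le> K' * (Ws n powr (real \<delta> + 1))" using K'1 by (intro mult_right_mono) auto
      finally have "ln (Ws (Suc n)) \<le> ln (K' * (Ws n powr (real \<delta> + 1)))"
        using Wp[of n] Wp[of "Suc n"] K'1 by (subst ln_le_cancel_iff) auto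
      thus ?thesis unfolding u_def \<kappa>_def using Wp[of n] K'1 by (simp add: ln_mult ln_powr)
    qed
    have u0: "u 0 \<le> - \<kappa> - 1" unfolding u_def using W0 Wp[of 0]
      by (metis ln_exp ln_le_cancel_iff exp_gt_zero)
    have tb: "u n + \<kappa> / real \<delta> \<le> - ((real \<delta> + 1) ^ n)" for n
    proof (induction n)
      case 0
      have "\<kappa> / real \<delta> \<le> \<kappa>" using \<kappa>0 \<delta>2 by (simp add: divide_le_eq mult_le_cancel_left1)
      thus ?case using u0 by simp
    next
      case (Suc n)
      have "u (Suc n) + \<kappa> / real \<delta> \<le> \<kappa> + (real \<delta> + 1) * u n + \<kappa> / real \<delta>" using ustep[of n] by simp
      also have "\<dots> = (real \<delta> + 1) * (u n + \<kappa> / real \<delta>)" using dpos by (simp add: field_simps)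
      also have "\<dots> \<le> (real \<delta> + 1) * (- ((real \<delta> + 1) ^ n))" using Suc by (intro mult_left_mono) auto
      finally show ?case by simp
    qed
    have ub: "u n / real \<delta> ^ n \<le> - (((real \<delta> + 1) / real \<delta>) ^ n)" for n
    proof -
      have "u n \<le> - ((real \<delta> + 1) ^ n)" using tb[of n] \<kappa>0 dpos by (smt (verit) divide_nonneg_nonneg of_nat_0_le_iff)
      hence "u n / real \<delta> ^ n \<le> - ((real \<delta> + 1) ^ n) / real \<delta> ^ n" using dpos by (intro divide_right_mono) auto
      thus ?thesis by (simp add: power_divide)
    qed
    have geq: "green_seq \<delta> (\<lambda>n. max (Zs n powr \<alpha>) (Ws n)) n = ereal (u n / real \<delta> ^ n)" for n
      using green_pos[of "\<lambda>n. max (Zs n powr \<alpha>) (Ws n)" n \<delta>] M Wp dpos unfolding u_def by simp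
    show ?thesis unfolding tendsto_MInfty
    proof
      fix r :: real
      have q1: "(real \<delta> + 1) / real \<delta> > 1" using dpos by simp
      obtain N where N: "\<bar>r\<bar> < ((real \<delta> + 1) / real \<delta>) ^ N" using real_arch_pow[OF q1] by blast
      show "\<forall>\<^sub>F x in sequentially. green_seq \<delta> (\<lambda>n. max (Zs n powr \<alpha>) (Ws n)) x < ereal r"
        unfolding eventually_sequentially
      proof (intro exI allI impI)
        fix n assume "n \<ge> N"
        hence "((real \<delta> + 1) / real \<delta>) ^ N \<le> ((real \<delta> + 1) / real \<delta>) ^ n"
          using q1 by (intro power_increasing) auto
        hence "u n / real \<delta> ^ n < r" using ub[of n] N by linarith
        thus "green_seq \<delta> (\<lambda>n. max (Zs n powr \<alpha>) (Ws n)) n < ereal r" using geq by simp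
      qed
    qed
  qed
qed

lemma part2_caseA:
  fixes Zs Ws :: "nat \<Rightarrow> real" and \<delta> :: nat and \<alpha> c1 c2 K :: real
  defines "M \<equiv> \<lambda>n. max (Zs n powr \<alpha>) (Ws n)"
  assumes Zp: "\<And>n. Zs n > 0" and Wn: "\<And>n. Ws n \<ge> 0"
    and c: "c1 > 0" "c2 > 0" "K \<ge> 0" "\<alpha> > 0" and \<delta>2: "\<delta> \<ge> 2"
    and Z1: "\<And>n. c1 * Zs n ^ \<delta> \<le> Zs (Suc n)" and Z2: "\<And>n. Zs (Suc n) \<le> c2 * Zs n ^ \<delta>"
    and Q: "\<And>n. Ws (Suc n) \<le> K * (Zs n * M n powr (real \<delta> - 1/\<alpha>) + M n powr (real \<delta> + 1))"
    and small1: "\<And>n. M n \<le> 1"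
    and small0: "M 0 \<le> exp (- ln (2*K + c2 powr \<alpha> + 1) - 1)"
  shows "\<exists>g. (\<lambda>n. ln (Zs n) / real \<delta> ^ n) \<longlonglongrightarrow> g \<and> (\<lambda>n. ln (M n) / real \<delta> ^ n) \<longlonglongrightarrow> \<alpha> * g"
proof -
  have d1: "real \<delta> > 1" using \<delta>2 by linarith
  have dpos: "real \<delta> > 0" using d1 by linarith
  define K' where "K' = 2*K + c2 powr \<alpha> + 1"
  define \<kappa> where "\<kappa> = ln K'"
  have K'1: "K' \<ge> 1" unfolding K'_def using c by auto
  have \<kappa>0: "\<kappa> \<ge> 0" unfolding \<kappa>_def using K'1 by simp
  define x where "x n = ln (Zs n)" for n
  have xs: "\<bar>x (Suc n) - real \<delta> * x n\<bar> \<le> \<bar>ln c1\<bar> + \<bar>ln c2\<bar>" for n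
    unfolding x_def using log_step[OF Zp c(1) Z1 Z2] by simp
  have xlow: "ln c1 + real \<delta> * x n \<le> x (Suc n)" for n
  proof -
    have "ln (c1 * Zs n ^ \<delta>) \<le> ln (Zs (Suc n))" using Z1[of n] Zp c by (subst ln_le_cancel_iff) auto
    thus ?thesis unfolding x_def using c Zp[of n] by (simp add: ln_mult ln_realpow)
  qed
  have "convergent (\<lambda>n. x n / real \<delta> ^ n)" by (rule green_conv[of "real \<delta>" x, OF d1 xs])
  then obtain g where A: "(\<lambda>n. x n / real \<delta> ^ n) \<longlonglongrightarrow> g" unfolding convergent_def by blast
  have "Bseq (\<lambda>n. x n / real \<delta> ^ n)" using A by (rule convergent_imp_Bseq[OF convergentI])
  then obtain B where B: "B > 0" "\<And>n. norm (x n / real \<delta> ^ n) \<le> B" by (rule BseqE) blast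
  have Mp: "M n > 0" for n unfolding M_def using Zp[of n] by (simp add: less_max_iff_disj)
  define u where "u n = ln (M n)" for n
  have ZaM: "Zs n powr \<alpha> \<le> M n" for n unfolding M_def by simp
  have ua: "\<alpha> * x n \<le> u n" for n
  proof -
    have "ln (Zs n powr \<alpha>) \<le> ln (M n)" using ZaM[of n] Zp[of n] Mp[of n] by (subst ln_le_cancel_iff) auto
    thus ?thesis unfolding x_def u_def using Zp[of n] by (simp add: ln_powr)
  qed
  have ZleM: "Zs n \<le> M n powr (1/\<alpha>)" for n
  proof -
    have "Zs n = (Zs n powr \<alpha>) powr (1/\<alpha>)" using c Zp[of n] by (simp add: powr_powr)
    also have "\<dots> \<le> M n powr (1/\<alpha>)" using ZaM[of n] c by (intro powr_mono2) auto
    finally show ?thesis .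
  qed
  have Mstep: "M (Suc n) \<le> K' * M n powr real \<delta>" for n
  proof -
    have "Zs (Suc n) powr \<alpha> \<le> (c2 * Zs n ^ \<delta>) powr \<alpha>" using Z2[of n] Zp[of "Suc n"] c by (intro powr_mono2) auto
    also have "\<dots> = c2 powr \<alpha> * (Zs n powr \<alpha>) powr real \<delta>" using c Zp[of n]
      by (simp add: powr_mult powr_powr powr_realpow[symmetric] mult.commute)
    also have "\<dots> \<le> c2 powr \<alpha> * M n powr real \<delta>" using ZaM[of n] Zp[of n]
      by (intro mult_left_mono powr_mono2) auto
    finally have a1: "Zs (Suc n) powr \<alpha> \<le> c2 powr \<alpha> * M n powr real \<delta>" .
    have "Zs n * M n powr (real \<delta> - 1/\<alpha>) \<le> M n powr (1/\<alpha>) * M n powr (real \<delta> - 1/\<alpha>)"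
      using ZleM[of n] by (intro mult_right_mono) auto
    also have "\<dots> = M n powr real \<delta>" using Mp[of n] by (simp add: powr_add[symmetric])
    finally have b1: "Zs n * M n powr (real \<delta> - 1/\<alpha>) \<le> M n powr real \<delta>" .
    have b2: "M n powr (real \<delta> + 1) \<le> M n powr real \<delta>" using small1[of n] Mp[of n]
      by (intro powr_mono') auto
    have "Ws (Suc n) \<le> K * (M n powr real \<delta> + M n powr real \<delta>)"
      using Q[of n] b1 b2 c by (smt (verit) mult_left_mono)
    hence a2: "Ws (Suc n) \<le> 2 * K * M n powr real \<delta>" by simp
    have P0: "M n powr real \<delta> \<ge> 0" by simp
    have e1: "(2 * K + c2 powr \<alpha>) * M n powr real \<delta> = 2 * K * M n powr real \<delta> + c2 powr \<alpha> * M n powr real \<delta>"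
      by (simp add: distrib_right)
    have e2: "2 * K * M n powr real \<delta> \<ge> 0" "c2 powr \<alpha> * M n powr real \<delta> \<ge> 0" using c P0 by auto
    have "Zs (Suc n) powr \<alpha> \<le> (2 * K + c2 powr \<alpha>) * M n powr real \<delta>" using a1 e1 e2 by linarith
    moreover have "Ws (Suc n) \<le> (2 * K + c2 powr \<alpha>) * M n powr real \<delta>" using a2 e1 e2 by linarith
    ultimately have "M (Suc n) \<le> (2 * K + c2 powr \<alpha>) * M n powr real \<delta>"
      unfolding M_def by simp
    also have "\<dots> \<le> K' * M n powr real \<delta>" unfolding K'_def using Mp[of n] by (intro mult_right_mono) auto
    finally show ?thesis .
  qed
  have ustep: "u (Suc n) \<le> \<kappa> + real \<delta> * u n" for n
  proof -
    have "ln (M (Suc n)) \<le> ln (K' * M n powr real \<delta>)" using Mstep[of n] Mp[of n] Mp[of "Suc n"] K'1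
      by (subst ln_le_cancel_iff) auto
    thus ?thesis unfolding u_def \<kappa>_def using K'1 Mp[of n] by (simp add: ln_mult ln_powr)
  qed
  have u0: "u 0 \<le> - \<kappa> - 1" unfolding u_def using small0 Mp[of 0] unfolding \<kappa>_def K'_def
    by (metis ln_exp ln_le_cancel_iff exp_gt_zero)
  have ub0: "u n + \<kappa> / (real \<delta> - 1) \<le> real \<delta> ^ n * (u 0 + \<kappa> / (real \<delta> - 1))" for n
  proof (induction n)
    case 0 thus ?case by simp
  next
    case (Suc n)
    have "u (Suc n) + \<kappa> / (real \<delta> - 1) \<le> \<kappa> + real \<delta> * u n + \<kappa> / (real \<delta> - 1)" using ustep[of n] by simp
    also have "\<dots> = real \<delta> * (u n + \<kappa> / (real \<delta> - 1))" using d1 by (simp add: field_simps)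
    also have "\<dots> \<le> real \<delta> * (real \<delta> ^ n * (u 0 + \<kappa> / (real \<delta> - 1)))"
      using Suc dpos by (intro mult_left_mono) auto
    finally show ?case by simp
  qed
  have ub: "u n \<le> - (real \<delta> ^ n)" for n
  proof -
    have k1: "\<kappa> / (real \<delta> - 1) \<le> \<kappa>" using \<kappa>0 \<delta>2 by (simp add: divide_le_eq mult_le_cancel_left1)
    have k2: "\<kappa> / (real \<delta> - 1) \<ge> 0" using \<kappa>0 d1 by simp
    have "u 0 + \<kappa> / (real \<delta> - 1) \<le> -1" using u0 k1 by linarith
    hence "real \<delta> ^ n * (u 0 + \<kappa> / (real \<delta> - 1)) \<le> real \<delta> ^ n * (-1)" using dpos by (intro mult_left_mono) auto
    thus ?thesis using ub0[of n] k2 by simp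
  qed
  define G where "G = \<alpha> * B"
  have Gpos: "G > 0" unfolding G_def using B c by simp
  define V where "V n = u n - \<alpha> * x n" for n
  have V0: "V n \<ge> 0" for n unfolding V_def using ua[of n] by simp
  have VG: "V n \<le> real \<delta> ^ n * G" for n
  proof -
    have "\<bar>x n / real \<delta> ^ n\<bar> \<le> B" using B(2)[of n] by (simp only: real_norm_def)
    hence "x n / real \<delta> ^ n \<ge> - B" by linarith
    hence "x n \<ge> - B * real \<delta> ^ n" using dpos by (simp add: field_simps)
    hence "\<alpha> * (- (B * real \<delta> ^ n)) \<le> \<alpha> * x n" using c by (intro mult_left_mono) auto
    hence h: "- (\<alpha> * x n) \<le> \<alpha> * (B * real \<delta> ^ n)" by simp
    have p: "real \<delta> ^ n > 0" using dpos by simp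
    have "u n - \<alpha> * x n \<le> \<alpha> * (B * real \<delta> ^ n)" using ub[of n] p h by linarith
    thus ?thesis unfolding V_def G_def by (simp add: algebra_simps)
  qed
  define \<rho>1 where "\<rho>1 = 1 - 1 / (\<alpha> * real \<delta>)"
  define \<rho>2 where "\<rho>2 = 1 - 1 / (real \<delta> * (G + 1))"
  define \<rho> where "\<rho> = max \<rho>1 \<rho>2"
  have "real \<delta> * (G + 1) \<ge> 1" using d1 Gpos by (smt (verit) mult_le_cancel_left1)
  hence \<rho>2pos: "\<rho>2 \<ge> 0" unfolding \<rho>2_def by (simp add: divide_le_eq)
  have \<rho>lt: "\<rho> < 1" unfolding \<rho>_def \<rho>1_def \<rho>2_def using c dpos Gpos by auto
  have \<rho>0: "\<rho> \<ge> 0" unfolding \<rho>_def using \<rho>2pos by simp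
  define \<kappa>3 where "\<kappa>3 = ln (2 * K + 1) + \<alpha> * \<bar>ln c1\<bar>"
  have \<kappa>3: "\<kappa>3 \<ge> 0" unfolding \<kappa>3_def using c by auto
  have Vstep: "V (Suc n) \<le> \<kappa>3 + real \<delta> * \<rho> * V n" for n
  proof (cases "Ws (Suc n) \<le> Zs (Suc n) powr \<alpha>")
    case True
    hence "M (Suc n) = Zs (Suc n) powr \<alpha>" unfolding M_def by simp
    hence "V (Suc n) = 0" unfolding V_def u_def x_def using Zp[of "Suc n"] by (simp add: ln_powr)
    moreover have "real \<delta> * \<rho> * V n \<ge> 0" using dpos \<rho>0 V0[of n] by simp
    ultimately show ?thesis using \<kappa>3 by simp
  next
    case False
    hence MW: "M (Suc n) = Ws (Suc n)" unfolding M_def by simp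
    have Wp': "Ws (Suc n) > 0" using False Zp[of "Suc n"] by (smt (verit) powr_gt_zero)
    have uS: "u (Suc n) = ln (Ws (Suc n))" unfolding u_def MW ..
    define P1 where "P1 = Zs n * M n powr (real \<delta> - 1/\<alpha>)"
    define P2 where "P2 = M n powr (real \<delta> + 1)"
    have P1p: "P1 > 0" unfolding P1_def using Zp[of n] Mp[of n] by simp
    have P2p: "P2 > 0" unfolding P2_def using Mp[of n] by simp
    have Kp: "K > 0"
    proof (rule ccontr)
      assume "\<not> K > 0" hence "K = 0" using c by simp
      thus False using Q[of n] Wp' by simp
    qed
    have lnP1: "ln P1 = x n + (real \<delta> - 1/\<alpha>) * u n" unfolding P1_def x_def u_def
      using Zp[of n] Mp[of n] by (simp add: ln_mult ln_powr)
    have lnP2: "ln P2 = (real \<delta> + 1) * u n" unfolding P2_def u_def using Mp[of n] by (simp add: ln_powr)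
    have l2K: "ln (2 * K) \<le> ln (2 * K + 1)" using Kp by simp
    have ax: "\<alpha> * x (Suc n) \<ge> \<alpha> * ln c1 + \<alpha> * real \<delta> * x n"
      using xlow[of n] c by (smt (verit) distrib_left mult.assoc mult_left_mono)
    have "\<alpha> * (- ln c1) \<le> \<alpha> * \<bar>ln c1\<bar>" using c by (intro mult_left_mono) auto
    hence lc1: "- \<alpha> * ln c1 \<le> \<alpha> * \<bar>ln c1\<bar>" by simp
    show ?thesis
    proof (cases "P2 \<le> P1")
      case True
      have "K * (P1 + P2) \<le> K * (2 * P1)" using True Kp by (intro mult_left_mono) auto
      hence "Ws (Suc n) \<le> 2 * K * P1" using Q[of n] unfolding P1_def[symmetric] P2_def[symmetric]
        by simp
      hence "ln (Ws (Suc n)) \<le> ln (2 * K * P1)" using Wp' by (subst ln_le_cancel_iff) auto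
      hence "u (Suc n) \<le> ln (2 * K) + x n + (real \<delta> - 1/\<alpha>) * u n"
        using uS Kp P1p lnP1 by (simp add: ln_mult)
      hence "V (Suc n) \<le> ln (2 * K) - \<alpha> * ln c1 + (real \<delta> - 1/\<alpha>) * (u n - \<alpha> * x n)"
        unfolding V_def using ax c by (simp add: algebra_simps)
      also have "(real \<delta> - 1/\<alpha>) * (u n - \<alpha> * x n) = real \<delta> * \<rho>1 * V n"
        unfolding \<rho>1_def V_def using c dpos by (simp add: field_simps)
      also have "real \<delta> * \<rho>1 * V n \<le> real \<delta> * \<rho> * V n"
        unfolding \<rho>_def using dpos V0[of n] by (intro mult_right_mono mult_left_mono) auto
      finally show ?thesis unfolding \<kappa>3_def using l2K lc1 by linarith
    next
      case False
      have "K * (P1 + P2) \<le> K * (2 * P2)" using False Kp by (intro mult_left_mono) auto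
      hence "Ws (Suc n) \<le> 2 * K * P2" using Q[of n] unfolding P1_def[symmetric] P2_def[symmetric]
        by simp
      hence "ln (Ws (Suc n)) \<le> ln (2 * K * P2)" using Wp' by (subst ln_le_cancel_iff) auto
      hence "u (Suc n) \<le> ln (2 * K) + (real \<delta> + 1) * u n"
        using uS Kp P2p lnP2 by (simp add: ln_mult)
      hence "V (Suc n) \<le> ln (2 * K) - \<alpha> * ln c1 + (real \<delta> * V n + u n)"
        unfolding V_def using ax c by (simp add: algebra_simps)
      also have "real \<delta> * V n + u n \<le> real \<delta> * \<rho>2 * V n"
      proof -
        have "real \<delta> * V n - real \<delta> * \<rho>2 * V n = real \<delta> * V n * (1 / (real \<delta> * (G + 1)))"
          unfolding \<rho>2_def by (simp add: algebra_simps)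
        also have "\<dots> = V n / (G + 1)" using dpos Gpos by simp
        finally have "real \<delta> * V n - real \<delta> * \<rho>2 * V n = V n / (G + 1)" .
        also have "\<dots> \<le> real \<delta> ^ n * G / (G + 1)" using VG[of n] Gpos by (intro divide_right_mono) auto
        also have "\<dots> \<le> real \<delta> ^ n" using Gpos dpos by (simp add: field_simps)
        finally show ?thesis using ub[of n] by linarith
      qed
      also have "real \<delta> * \<rho>2 * V n \<le> real \<delta> * \<rho> * V n"
        unfolding \<rho>_def using dpos V0[of n] by (intro mult_right_mono mult_left_mono) auto
      finally show ?thesis unfolding \<kappa>3_def using l2K lc1 by linarith
    qed
  qed
  define D where "D n = V n / real \<delta> ^ n" for n
  have Dstep: "D (Suc n) \<le> \<rho> * D n + \<kappa>3 / real \<delta> ^ n / real \<delta>" for n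
  proof -
    have "D (Suc n) \<le> (\<kappa>3 + real \<delta> * \<rho> * V n) / real \<delta> ^ Suc n"
      unfolding D_def using Vstep[of n] dpos by (intro divide_right_mono) auto
    also have "\<dots> = \<rho> * D n + \<kappa>3 / real \<delta> ^ n / real \<delta>" unfolding D_def using dpos by (simp add: field_simps)
    finally show ?thesis .
  qed
  have e: "(\<lambda>n. \<kappa>3 / real \<delta> ^ n / real \<delta>) \<longlonglongrightarrow> 0"
  proof -
    have "(\<lambda>n. \<kappa>3 / real \<delta> ^ n) \<longlonglongrightarrow> 0" by (rule bdd_div_pow[OF _ d1]) auto
    hence "(\<lambda>n. \<kappa>3 / real \<delta> ^ n / real \<delta>) \<longlonglongrightarrow> 0 / real \<delta>" using dpos by (intro tendsto_divide) auto
    thus ?thesis by simp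
  qed
  have "D \<longlonglongrightarrow> 0" by (rule contract_tendsto[OF _ Dstep e \<rho>0 \<rho>lt]) (use V0 dpos in \<open>simp add: D_def\<close>)
  hence "(\<lambda>n. D n + \<alpha> * (x n / real \<delta> ^ n)) \<longlonglongrightarrow> 0 + \<alpha> * g" by (intro tendsto_add tendsto_mult A tendsto_const)
  moreover have "D n + \<alpha> * (x n / real \<delta> ^ n) = u n / real \<delta> ^ n" for n
    unfolding D_def V_def using dpos by (simp add: field_simps)
  ultimately have "(\<lambda>n. u n / real \<delta> ^ n) \<longlonglongrightarrow> \<alpha> * g" by simp
  thus ?thesis using A unfolding u_def x_def by auto
qed

lemma series_abs:
  assumes ser: "\<forall>z w. cmod z < \<epsilon> \<and> cmod w < \<epsilon> \<longrightarrow> ((\<lambda>(i, j). b i j * z ^ i * w ^ j) has_sum q z w) UNIV"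
    and \<rho>: "0 < \<rho>" "\<rho> < \<epsilon>"
  shows "(\<lambda>(i, j). cmod (b i j) * \<rho> ^ (i + j)) summable_on UNIV"
proof -
  have "((\<lambda>(i, j). b i j * complex_of_real \<rho> ^ i * complex_of_real \<rho> ^ j) has_sum q \<rho> \<rho>) UNIV"
    using ser \<rho> by auto
  hence "(\<lambda>(i, j). b i j * complex_of_real \<rho> ^ i * complex_of_real \<rho> ^ j) summable_on UNIV"
    unfolding summable_on_def by blast
  hence "(\<lambda>x. norm ((\<lambda>(i, j). b i j * complex_of_real \<rho> ^ i * complex_of_real \<rho> ^ j) x)) summable_on UNIV"
    by (simp add: summable_on_iff_abs_summable_on_complex)
  moreover have "norm ((\<lambda>(i, j). b i j * complex_of_real \<rho> ^ i * complex_of_real \<rho> ^ j) x) = (\<lambda>(i, j). cmod (b i j) * \<rho> ^ (i + j)) x" for x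
    using \<rho> by (cases x) (simp add: norm_mult norm_power power_add)
  ultimately show ?thesis by simp
qed

lemma series_bound:
  fixes F :: "nat \<times> nat \<Rightarrow> complex" and g :: "nat \<times> nat \<Rightarrow> real"
  assumes F: "(F has_sum Q) UNIV" and g: "g summable_on UNIV" and b: "\<And>x. norm (F x) \<le> W * g x"
  shows "norm Q \<le> W * infsum g UNIV"
proof -
  have "((\<lambda>x. W * g x) has_sum W * infsum g UNIV) UNIV" using g by (intro has_sum_cmult_right) auto
  thus ?thesis using norm_infsum_le[OF F] b by blast
qed

lemma has_sum_remove1:
  fixes F :: "'a \<Rightarrow> complex"
  assumes F: "(F has_sum Q) UNIV"
  shows "((\<lambda>x. if x = x0 then 0 else F x) has_sum (Q - F x0)) UNIV"
proof -
  have "((\<lambda>x. if x = x0 then - F x0 else 0) has_sum (- F x0)) UNIV"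
    by (rule has_sum_finite_neutralI[of "{x0}"]) auto
  from has_sum_add[OF F this] have "((\<lambda>x. F x + (if x = x0 then - F x0 else 0)) has_sum (Q + - F x0)) UNIV" .
  moreover have "(\<lambda>x. F x + (if x = x0 then - F x0 else 0)) = (\<lambda>x. if x = x0 then 0 else F x)" by auto
  ultimately show ?thesis by simp
qed

lemma maxlem:
  fixes E k C x :: real
  assumes "k > 0" "C \<ge> 0" "E \<ge> k" "E \<ge> x - C" "x \<ge> 0"
  shows "E \<ge> k / (k + C) * x"
proof (cases "x \<le> k + C")
  case True
  have "k / (k + C) * x \<le> k / (k + C) * (k + C)" using True assms by (intro mult_left_mono) auto
  also have "\<dots> = k" using assms by simp
  finally show ?thesis using assms by simp
next
  case False
  have "k / (k + C) * x = x - C / (k + C) * x" using assms by (simp add: field_simps)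
  also have "C / (k + C) * x \<ge> C / (k + C) * (k + C)" using False assms by (intro mult_left_mono) auto
  hence "x - C / (k + C) * x \<le> x - C" using assms by simp
  finally show ?thesis using assms by simp
qed

lemma term_bound1:
  fixes X Y R l1 l2 :: real and i j \<gamma> d :: nat
  assumes R: "R < 0" "X \<le> R" and l: "l1 > 0" "l2 > 0"
    and U1: "(l1 + l2) * X < l2 * R + Y" and U2: "Y < R + l1 * X"
    and NP1: "real i + l1 * real j \<ge> real \<gamma> + l1 * real d"
    and NP2: "real i + (l1 + l2) * real j \<ge> real \<gamma> + (l1 + l2) * real d"
    and ne: "(i, j) \<noteq> (\<gamma>, d)"
  shows "real i * X + real j * Y \<le> real \<gamma> * X + real d * Y + (min 1 l2 / 2) * R
           + real (i + j) * ((min 1 l2 / (min 1 l2 + (real \<gamma> + (l1 + 1) * real d))) / 2) * R"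
proof -
  define k where "k = min 1 l2"
  define C where "C = real \<gamma> + (l1 + 1) * real d"
  have k: "k > 0" "k \<le> 1" "k \<le> l2" unfolding k_def using l by auto
  have C: "C \<ge> 0" unfolding C_def using l by auto
  have "\<exists>E. E \<ge> k \<and> E \<ge> real (i + j) - C \<and> real i * X + real j * Y \<le> real \<gamma> * X + real d * Y + E * R"
  proof (cases "j > d")
    case True
    define t where "t = real j - real d"
    have t: "t \<ge> 1" unfolding t_def using True by linarith
    define A where "A = real i - real \<gamma> + l1 * t"
    have A: "A \<ge> 0" unfolding A_def t_def using NP1 by (simp add: algebra_simps)
    have "t * Y \<le> t * (R + l1 * X)" using U2 t by (intro mult_left_mono) auto
    moreover have "A * X \<le> A * R" using A R by (intro mult_left_mono) auto
    ultimately have "real i * X + real j * Y \<le> real \<gamma> * X + real d * Y + (A + t) * R"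
      unfolding A_def t_def by (simp add: algebra_simps)
    moreover have "A + t \<ge> k" using A t k by linarith
    moreover have "A + t \<ge> real (i + j) - C"
    proof -
      have "l1 * real j \<ge> 0" using l by simp
      thus ?thesis unfolding A_def t_def C_def by (simp add: algebra_simps)
    qed
    ultimately show ?thesis by blast
  next
    case False
    show ?thesis
    proof (cases "j < d")
      case True
      define t where "t = real d - real j"
      have t: "t \<ge> 1" unfolding t_def using True by linarith
      define A where "A = real i - real \<gamma> - (l1 + l2) * t"
      have A: "A \<ge> 0" unfolding A_def t_def using NP2 by (simp add: algebra_simps)
      have "t * ((l1 + l2) * X - l2 * R) \<le> t * Y" using U1 t by (intro mult_left_mono) auto
      moreover have "A * X \<le> A * R" using A R by (intro mult_left_mono) auto
      ultimately have "real i * X + real j * Y \<le> real \<gamma> * X + real d * Y + (A + t * l2) * R"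
        unfolding A_def t_def by (simp add: algebra_simps)
      moreover have "A + t * l2 \<ge> k"
      proof -
        have "t * l2 \<ge> 1 * l2" using t l by (intro mult_right_mono) auto
        thus ?thesis using A k by linarith
      qed
      moreover have "A + t * l2 \<ge> real (i + j) - C"
      proof -
        have "A + t * l2 = real i - real \<gamma> - l1 * t" unfolding A_def by (simp add: algebra_simps)
        moreover have "l1 * t \<le> l1 * real d" unfolding t_def using l by (intro mult_left_mono) auto
        moreover have "real j \<le> real d" using True by simp
        ultimately show ?thesis unfolding C_def by (simp add: algebra_simps)
      qed
      ultimately show ?thesis by blast
    next
      case False
      hence jd: "j = d" using \<open>\<not> j > d\<close> by simp
      hence "i \<noteq> \<gamma>" using ne by auto
      moreover have "real i \<ge> real \<gamma>" using NP1 jd by simp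
      ultimately have t: "real i - real \<gamma> \<ge> 1" by linarith
      have "(real i - real \<gamma>) * X \<le> (real i - real \<gamma>) * R" using t R by (intro mult_left_mono) auto
      hence "real i * X + real j * Y \<le> real \<gamma> * X + real d * Y + (real i - real \<gamma>) * R"
        using jd by (simp add: algebra_simps)
      moreover have "real i - real \<gamma> \<ge> k" using t k by linarith
      moreover have "real i - real \<gamma> \<ge> real (i + j) - C"
      proof -
        have "l1 * real d \<ge> 0" using l by simp
        thus ?thesis unfolding C_def using jd by (simp add: algebra_simps)
      qed
      ultimately show ?thesis by blast
    qed
  qed
  then obtain E where E: "E \<ge> k" "E \<ge> real (i + j) - C"
    and b: "real i * X + real j * Y \<le> real \<gamma> * X + real d * Y + E * R" by blast
  define y where "y = k / (k + C) * real (i + j)"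
  have Ey: "E \<ge> y" unfolding y_def by (rule maxlem[OF k(1) C E]) simp
  have eq: "real (i + j) * (k / (k + C) / 2) = y / 2" unfolding y_def by simp
  have "E \<ge> k / 2 + y / 2" using Ey E(1) by linarith
  hence "E \<ge> k / 2 + real (i + j) * (k / (k + C) / 2)" unfolding eq .
  hence "E * R \<le> (k / 2 + real (i + j) * (k / (k + C) / 2)) * R" using R by (intro mult_right_mono_neg) auto
  thus ?thesis using b unfolding k_def[symmetric] C_def[symmetric] by (simp add: algebra_simps)
qed

lemma term_bound1':
  fixes Z W r l1 l2 :: real and i j \<gamma> d :: nat
  assumes Z: "Z > 0" and W: "W > 0" and r: "0 < r" "r < 1" "Z \<le> r" and l: "l1 > 0" "l2 > 0"
    and U1: "(l1 + l2) * ln Z < l2 * ln r + ln W" and U2: "ln W < ln r + l1 * ln Z"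
    and NP1: "real i + l1 * real j \<ge> real \<gamma> + l1 * real d"
    and NP2: "real i + (l1 + l2) * real j \<ge> real \<gamma> + (l1 + l2) * real d"
    and ne: "(i, j) \<noteq> (\<gamma>, d)"
  shows "Z ^ i * W ^ j \<le> Z ^ \<gamma> * W ^ d * r powr (min 1 l2 / 2)
           * (r powr ((min 1 l2 / (min 1 l2 + (real \<gamma> + (l1 + 1) * real d))) / 2)) ^ (i + j)"
proof -
  define k where "k = min 1 l2 / 2"
  define c where "c = (min 1 l2 / (min 1 l2 + (real \<gamma> + (l1 + 1) * real d))) / 2"
  have R: "ln r < 0" using r by simp
  have X: "ln Z \<le> ln r" using r Z by simp
  have b: "real i * ln Z + real j * ln W \<le> real \<gamma> * ln Z + real d * ln W + k * ln r + real (i + j) * c * ln r"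
    using term_bound1[OF R X l U1 U2 NP1 NP2 ne] unfolding k_def c_def by simp
  have "Z ^ i * W ^ j = exp (real i * ln Z + real j * ln W)"
    using Z W by (simp add: exp_add exp_of_nat_mult)
  also have "\<dots> \<le> exp (real \<gamma> * ln Z + real d * ln W + k * ln r + real (i + j) * c * ln r)"
    using b by simp
  also have "\<dots> = Z ^ \<gamma> * W ^ d * r powr k * (r powr c) ^ (i + j)"
  proof -
    have e1: "exp (real \<gamma> * ln Z) = Z ^ \<gamma>" using Z by (simp add: exp_of_nat_mult)
    have e2: "exp (real d * ln W) = W ^ d" using W by (simp add: exp_of_nat_mult)
    have e3: "exp (k * ln r) = r powr k" using r by (simp add: powr_def)
    have "exp (real (i + j) * (c * ln r)) = exp (c * ln r) ^ (i + j)" by (rule exp_of_nat_mult)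
    hence e4: "exp (real (i + j) * c * ln r) = (r powr c) ^ (i + j)" using r by (simp add: powr_def mult.assoc)
    show ?thesis by (simp only: exp_add e1 e2 e3 e4)
  qed
  finally show ?thesis unfolding k_def c_def .
qed

lemma term_bound2:
  fixes Zv Wv \<alpha> M M0 :: real and i j \<delta> :: nat
  assumes \<alpha>: "\<alpha> > 0" and Zv: "Zv \<ge> 0" and Wv: "Wv \<ge> 0"
    and M: "M = max (Zv powr \<alpha>) Wv" "0 < M" "M \<le> M0" "M0 \<le> 1"
    and cond: "(i \<ge> 1 \<and> real i / \<alpha> + real j \<ge> real \<delta>) \<or> (i = 0 \<and> j \<ge> \<delta> + 1)"
  shows "Zv ^ i * Wv ^ j \<le> M0 powr (- (real \<delta> + 1)) * (M0 powr (min (1/\<alpha>) 1)) ^ (i + j)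
           * (Zv * M powr (real \<delta> - 1/\<alpha>) + M powr (real \<delta> + 1))"
proof -
  define \<theta> where "\<theta> = min (1/\<alpha>) 1"
  have \<theta>: "\<theta> \<le> 1/\<alpha>" "\<theta> \<le> 1" "\<theta> > 0" unfolding \<theta>_def using \<alpha> by auto
  have M0: "M0 > 0" using M(2,3) by linarith
  have WM: "Wv \<le> M" using M by simp
  have ZM: "Zv \<le> M powr (1/\<alpha>)"
  proof (cases "Zv = 0")
    case True thus ?thesis by simp
  next
    case False
    hence "Zv = (Zv powr \<alpha>) powr (1/\<alpha>)" using Zv \<alpha> by (simp add: powr_powr)
    also have "\<dots> \<le> M powr (1/\<alpha>)" using M \<alpha> by (intro powr_mono2) auto
    finally show ?thesis .
  qed
  have pw: "(M0 powr \<theta>) ^ n = M0 powr (real n * \<theta>)" for n using M0 by (simp add: powr_power)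
  have P1n: "Zv * M powr (real \<delta> - 1/\<alpha>) \<ge> 0" using Zv by simp
  have P2n: "M powr (real \<delta> + 1) \<ge> 0" by simp
  have Kmono: "M0 powr (- real \<delta>) \<le> M0 powr (- (real \<delta> + 1))" using M M0 by (intro powr_mono') auto
  show ?thesis
  proof (cases "i \<ge> 1")
    case True
    hence ij: "real i / \<alpha> + real j \<ge> real \<delta>" using cond by auto
    define e where "e = real (i - 1) / \<alpha> + real j"
    have ei: "real (i - 1) = real i - 1" using True by simp
    have "Zv ^ i * Wv ^ j = Zv * Zv ^ (i - 1) * Wv ^ j" using True by (metis One_nat_def Suc_pred mult.commute power_Suc2 less_eq_Suc_le)
    also have "\<dots> \<le> Zv * (M powr (1/\<alpha>)) ^ (i - 1) * M ^ j"
      using ZM WM Zv Wv by (intro mult_mono mult_left_mono power_mono) auto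
    finally have s1: "Zv ^ i * Wv ^ j \<le> Zv * ((M powr (1/\<alpha>)) ^ (i - 1) * M ^ j)" by (simp add: mult.assoc)
    have s2: "(M powr (1/\<alpha>)) ^ (i - 1) * M ^ j = M powr e"
    proof -
      have a: "(M powr (1/\<alpha>)) ^ (i - 1) = M powr (real (i - 1) * (1/\<alpha>))"
        by (rule powr_power) (use M(2) in auto)
      have b: "M ^ j = M powr real j" using M(2) by (simp add: powr_realpow)
      have "M powr (real (i - 1) * (1/\<alpha>)) * M powr real j = M powr (real (i - 1) * (1/\<alpha>) + real j)"
        by (simp add: powr_add)
      thus ?thesis unfolding a b e_def by simp
    qed
    have s3: "M powr e = M powr (real \<delta> - 1/\<alpha>) * M powr (e - (real \<delta> - 1/\<alpha>))"
      by (simp add: powr_add[symmetric])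
    have s4: "M powr (e - (real \<delta> - 1/\<alpha>)) \<le> M0 powr (e - (real \<delta> - 1/\<alpha>))"
    proof -
      have "e - (real \<delta> - 1/\<alpha>) = real i / \<alpha> + real j - real \<delta>" unfolding e_def ei
        by (simp add: diff_divide_distrib)
      hence "e - (real \<delta> - 1/\<alpha>) \<ge> 0" using ij by simp
      thus ?thesis using M by (intro powr_mono2) auto
    qed
    have s5: "M0 powr (e - (real \<delta> - 1/\<alpha>)) \<le> M0 powr (real (i + j) * \<theta> - real \<delta>)"
    proof -
      have "real i * \<theta> \<le> real i * (1/\<alpha>)" using \<theta> by (intro mult_left_mono) auto
      moreover have "real j * \<theta> \<le> real j * 1" using \<theta> by (intro mult_left_mono) auto
      moreover have "e - (real \<delta> - 1/\<alpha>) = real i * (1/\<alpha>) + real j * 1 - real \<delta>" unfolding e_def ei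
        by (simp add: diff_divide_distrib)
      moreover have "real (i + j) * \<theta> = real i * \<theta> + real j * \<theta>" by (simp add: algebra_simps)
      ultimately have "real (i + j) * \<theta> - real \<delta> \<le> e - (real \<delta> - 1/\<alpha>)" by linarith
      thus ?thesis using M M0 by (intro powr_mono') auto
    qed
    have s6: "M0 powr (real (i + j) * \<theta> - real \<delta>) = M0 powr (- real \<delta>) * (M0 powr \<theta>) ^ (i + j)"
      using pw M0 by (simp add: powr_add[symmetric])
    have "M powr e \<le> M powr (real \<delta> - 1/\<alpha>) * (M0 powr (- real \<delta>) * (M0 powr \<theta>) ^ (i + j))"
      unfolding s3 using s4 s5 s6 by (intro mult_left_mono) auto
    hence "Zv ^ i * Wv ^ j \<le> Zv * (M powr (real \<delta> - 1/\<alpha>) * (M0 powr (- real \<delta>) * (M0 powr \<theta>) ^ (i + j)))"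
      using s1 s2 Zv by (metis mult_left_mono order_trans)
    also have "\<dots> = M0 powr (- real \<delta>) * (M0 powr \<theta>) ^ (i + j) * (Zv * M powr (real \<delta> - 1/\<alpha>))" by simp
    also have "\<dots> \<le> M0 powr (- (real \<delta> + 1)) * (M0 powr \<theta>) ^ (i + j) * (Zv * M powr (real \<delta> - 1/\<alpha>))"
      using Kmono P1n by (intro mult_right_mono) auto
    also have "\<dots> \<le> M0 powr (- (real \<delta> + 1)) * (M0 powr \<theta>) ^ (i + j) * (Zv * M powr (real \<delta> - 1/\<alpha>) + M powr (real \<delta> + 1))"
      using P2n by (intro mult_left_mono) auto
    finally show ?thesis unfolding \<theta>_def .
  next
    case False
    hence i0: "i = 0" and j: "j \<ge> \<delta> + 1" using cond by auto
    have "Zv ^ i * Wv ^ j \<le> M ^ j" using i0 WM Wv by (simp add: power_mono)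
    also have "M ^ j = M powr (real \<delta> + 1) * M powr (real j - (real \<delta> + 1))"
      using M by (simp add: powr_add[symmetric] powr_realpow[symmetric])
    also have "\<dots> \<le> M powr (real \<delta> + 1) * M0 powr (real j - (real \<delta> + 1))"
      using j M by (intro mult_left_mono powr_mono2) auto
    also have "M0 powr (real j - (real \<delta> + 1)) \<le> M0 powr (real j * \<theta> - (real \<delta> + 1))"
    proof -
      have "real j * \<theta> \<le> real j * 1" using \<theta> by (intro mult_left_mono) auto
      thus ?thesis using M M0 by (intro powr_mono') auto
    qed
    also have "M0 powr (real j * \<theta> - (real \<delta> + 1)) = M0 powr (- (real \<delta> + 1)) * (M0 powr \<theta>) ^ (i + j)"
    proof -
      have "real j * \<theta> - (real \<delta> + 1) = - (real \<delta> + 1) + real (i + j) * \<theta>" using i0 by simp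
      thus ?thesis using pw M0 by (simp only: powr_add)
    qed
    finally have "Zv ^ i * Wv ^ j \<le> M powr (real \<delta> + 1) * (M0 powr (- (real \<delta> + 1)) * (M0 powr \<theta>) ^ (i + j))"
      using P2n by (simp add: mult_left_mono)
    also have "\<dots> \<le> M0 powr (- (real \<delta> + 1)) * (M0 powr \<theta>) ^ (i + j) * (Zv * M powr (real \<delta> - 1/\<alpha>) + M powr (real \<delta> + 1))"
    proof -
      define A where "A = M0 powr (- (real \<delta> + 1)) * (M0 powr \<theta>) ^ (i + j)"
      have "A \<ge> 0" unfolding A_def by simp
      hence "A * (Zv * M powr (real \<delta> - 1/\<alpha>)) \<ge> 0" using P1n by simp
      hence "M powr (real \<delta> + 1) * A \<le> A * (Zv * M powr (real \<delta> - 1/\<alpha>) + M powr (real \<delta> + 1))"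
        by (simp add: distrib_left mult.commute)
      thus ?thesis unfolding A_def .
    qed
    finally show ?thesis unfolding \<theta>_def .
  qed
qed

locale setting = npv b s n m
  for b :: "nat \<Rightarrow> nat \<Rightarrow> complex" and s :: nat and n m :: "nat \<Rightarrow> nat" +
  fixes p :: "complex \<Rightarrow> complex" and q :: "complex \<Rightarrow> complex \<Rightarrow> complex"
    and a :: complex and \<delta> :: nat and k :: nat and \<alpha> l1 l2 :: real
  assumes a_nz: "a \<noteq> 0" and delta_ge: "\<delta> \<ge> 2"
    and p_expansion: "\<exists>C \<epsilon>. \<epsilon> > 0 \<and>
          (\<forall>z. cmod z < \<epsilon> \<longrightarrow> cmod (p z - a * z ^ \<delta>) \<le> C * cmod z ^ (\<delta> + 1))"
    and q_series: "\<exists>\<epsilon>>0. \<forall>z w. cmod z < \<epsilon> \<and> cmod w < \<epsilon> \<longrightarrow>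
          ((\<lambda>(i, j). b i j * z ^ i * w ^ j) has_sum q z w) UNIV"
    and b00: "b 0 0 = 0"
    and case4: "s > 2" "2 \<le> k" "k \<le> s - 1"
       "intercept n m k \<le> real \<delta>" "real \<delta> \<le> intercept n m (k - 1)"
    and alpha_def: "\<alpha> = real (n k) / (real \<delta> - real (m k))"
    and l1_def: "l1 = (real (n k) - real (n (k - 1))) / (real (m (k - 1)) - real (m k))"
    and l12_def: "l1 + l2 = (real (n (k + 1)) - real (n k)) / (real (m k) - real (m (k + 1)))"
begin

lemma kS: "Suc k \<le> s" "2 \<le> k" using case4 by auto

lemma l1_lam: "l1 = lam (k - 1)"
  unfolding l1_def lam_def using kS by (simp add: Suc_diff_1)

lemma L_lam: "l1 + l2 = lam k"
  unfolding l12_def lam_def by simp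

lemma l1_pos: "l1 > 0" unfolding l1_lam using lam_pos[of "k - 1"] kS by auto

lemma l2_pos: "l2 > 0"
proof -
  have "lam (k - 1) < lam (Suc (k - 1))" using chain[of "k - 1"] kS by auto
  thus ?thesis using l1_lam L_lam kS by (simp add: Suc_diff_1)
qed

lemma nk_pos: "n k > 0" using n_lt[of 1 k] kS by auto

lemma mk_pos: "m k \<ge> 1" using m_lt[of k "Suc k"] kS by auto

lemma b0_nz: "b (n k) (m k) \<noteq> 0" using vert_b kS by auto

lemma Tk: "intercept n m k = real (m k) + real (n k) / (l1 + l2)"
proof -
  have "m (Suc k) < m k" "n k < n (Suc k)" using m_lt n_lt kS by auto
  thus ?thesis unfolding intercept_def L_lam lam_def by (simp add: field_simps)
qed

lemma Tk1: "intercept n m (k - 1) = real (m k) + real (n k) / l1"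
proof -
  have k1: "Suc (k - 1) = k" using kS by auto
  have kk: "k - 1 \<in> {1..s}" "k \<in> {1..s}" "k - 1 < k" using kS by auto
  have lt: "m k < m (k - 1)" "n (k - 1) < n k" using m_lt[OF kk] n_lt[OF kk] by auto
  have "intercept n m (k - 1) = real (m (k - 1)) + real (n (k - 1)) * (real (m (k - 1)) - real (m k)) / (real (n k) - real (n (k - 1)))"
    unfolding intercept_def k1 ..
  also have "\<dots> = real (m k) + real (n k) / l1"
    unfolding l1_def using lt by (simp add: field_simps)
  finally show ?thesis .
qed

lemma dd_pos: "real \<delta> - real (m k) > 0"
proof -
  have "real (n k) / (l1 + l2) > 0" using nk_pos l1_pos l2_pos by simp
  thus ?thesis using Tk case4(4) by linarith
qed

lemma alpha_pos: "\<alpha> > 0" unfolding alpha_def using nk_pos dd_pos by simp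

lemma alpha_eq: "\<alpha> * (real \<delta> - real (m k)) = real (n k)"
  unfolding alpha_def using dd_pos by simp

lemma alpha_le_L: "\<alpha> \<le> l1 + l2"
proof -
  have "real (n k) / (l1 + l2) \<le> real \<delta> - real (m k)" using Tk case4(4) by linarith
  hence "real (n k) \<le> (l1 + l2) * (real \<delta> - real (m k))" using l1_pos l2_pos by (simp add: divide_le_eq mult.commute)
  thus ?thesis unfolding alpha_def using dd_pos by (simp add: divide_le_eq mult.commute)
qed

lemma l1_le_alpha: "l1 \<le> \<alpha>"
proof -
  have "real \<delta> - real (m k) \<le> real (n k) / l1" using Tk1 case4(5) by linarith
  hence "l1 * (real \<delta> - real (m k)) \<le> real (n k)" using l1_pos by (simp add: le_divide_eq mult.commute)
  thus ?thesis unfolding alpha_def using dd_pos by (simp add: le_divide_eq mult.commute)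
qed

lemma NPl: assumes "l1 \<le> l" "l \<le> l1 + l2" "b i j \<noteq> 0"
  shows "real i + l * real j \<ge> real (n k) + l * real (m k)"
  using NP[of k l i j] kS assms l1_lam L_lam by auto

lemma NP_alpha: "b i j \<noteq> 0 \<Longrightarrow> real i + \<alpha> * real j \<ge> \<alpha> * real \<delta>"
  using NPl[OF l1_le_alpha alpha_le_L] alpha_eq by (simp add: algebra_simps)

lemma NP_cond:
  assumes nm1: "(n 1, m 1) \<noteq> (0, \<delta>)" and bij: "b i j \<noteq> 0"
  shows "(i \<ge> 1 \<and> real i / \<alpha> + real j \<ge> real \<delta>) \<or> (i = 0 \<and> j \<ge> \<delta> + 1)"
proof (cases "i = 0")
  case False
  have "real i + \<alpha> * real j \<ge> \<alpha> * real \<delta>" by (rule NP_alpha[OF bij])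
  hence "(real i + \<alpha> * real j) / \<alpha> \<ge> \<alpha> * real \<delta> / \<alpha>" using alpha_pos by (intro divide_right_mono) auto
  hence "real i / \<alpha> + real j \<ge> real \<delta>" using alpha_pos by (simp add: add_divide_distrib)
  thus ?thesis using False by auto
next
  case True
  have "real 0 + \<alpha> * real j \<ge> \<alpha> * real \<delta>" using NP_alpha[OF bij] True by simp
  hence jd: "j \<ge> \<delta>" using alpha_pos by simp
  have "j \<noteq> \<delta>"
  proof
    assume "j = \<delta>"
    have "\<alpha> * real j \<le> real (n k) + \<alpha> * real (m k)" using \<open>j = \<delta>\<close> alpha_eq by (simp add: algebra_simps)
    hence "n 1 = 0 \<and> m 1 = j" using NP2[of k \<alpha> j] kS l1_lam L_lam l1_le_alpha alpha_le_L bij True by auto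
    thus False using nm1 \<open>j = \<delta>\<close> by auto
  qed
  thus ?thesis using True jd by auto
qed

end

lemma Z_le_Mpow:
  fixes Zv W \<alpha> :: real
  assumes "Zv \<ge> 0" "\<alpha> > 0"
  shows "Zv \<le> max (Zv powr \<alpha>) W powr (1/\<alpha>)"
proof (cases "Zv = 0")
  case True thus ?thesis by simp
next
  case False
  hence "Zv = (Zv powr \<alpha>) powr (1/\<alpha>)" using assms by (simp add: powr_powr)
  also have "\<dots> \<le> max (Zv powr \<alpha>) W powr (1/\<alpha>)" using assms by (intro powr_mono2) auto
  finally show ?thesis .
qed

lemma cancel2: "(c::real) \<noteq> 0 \<Longrightarrow> c * (A / (2 * c)) = A / 2" by simp

context setting begin

lemma p_bounds: "\<exists>\<tau>>0. \<forall>z. cmod z < \<tau> \<longrightarrow>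
    cmod a / 2 * cmod z ^ \<delta> \<le> cmod (p z) \<and> cmod (p z) \<le> 2 * cmod a * cmod z ^ \<delta>"
proof -
  obtain C \<epsilon> where \<epsilon>: "\<epsilon> > 0" and C: "\<And>z. cmod z < \<epsilon> \<Longrightarrow> cmod (p z - a * z ^ \<delta>) \<le> C * cmod z ^ (\<delta> + 1)"
    using p_expansion by blast
  define \<tau> where "\<tau> = min \<epsilon> (cmod a / (2 * (\<bar>C\<bar> + 1)))"
  have \<tau>: "\<tau> > 0" unfolding \<tau>_def using \<epsilon> a_nz by simp
  show ?thesis
  proof (rule exI[of _ \<tau>], rule conjI[OF \<tau>], intro allI impI)
    fix z assume z: "cmod z < \<tau>"
    have h1: "C * cmod z ^ (\<delta> + 1) \<le> (\<bar>C\<bar> + 1) * cmod z * cmod z ^ \<delta>"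
    proof -
      have "C * cmod z ^ (\<delta> + 1) = C * cmod z * cmod z ^ \<delta>" by (simp add: power_Suc2 mult.assoc mult.commute)
      also have "\<dots> \<le> (\<bar>C\<bar> + 1) * cmod z * cmod z ^ \<delta>" by (intro mult_right_mono) auto
      finally show ?thesis .
    qed
    have h2: "(\<bar>C\<bar> + 1) * cmod z \<le> (\<bar>C\<bar> + 1) * (cmod a / (2 * (\<bar>C\<bar> + 1)))"
      using z unfolding \<tau>_def by (intro mult_left_mono) auto
    have "\<bar>C\<bar> + 1 \<noteq> 0" using abs_ge_zero[of C] by linarith
    hence h3: "(\<bar>C\<bar> + 1) * (cmod a / (2 * (\<bar>C\<bar> + 1))) = cmod a / 2" using cancel2 by blast
    have h4: "(\<bar>C\<bar> + 1) * cmod z * cmod z ^ \<delta> \<le> cmod a / 2 * cmod z ^ \<delta>"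
    proof -
      have h23: "(\<bar>C\<bar> + 1) * cmod z \<le> cmod a / 2" using h2 h3 by linarith
      show ?thesis by (rule mult_right_mono[OF h23]) simp
    qed
    have e: "cmod (p z - a * z ^ \<delta>) \<le> cmod a / 2 * cmod z ^ \<delta>"
      using C[of z] z h1 h4 unfolding \<tau>_def by auto
    have az: "cmod (a * z ^ \<delta>) = cmod a * cmod z ^ \<delta>" by (simp add: norm_mult norm_power)
    have "cmod (p z - (p z - a * z ^ \<delta>)) \<le> cmod (p z) + cmod (p z - a * z ^ \<delta>)" by (rule norm_triangle_ineq4)
    hence "cmod (a * z ^ \<delta>) \<le> cmod (p z) + cmod (p z - a * z ^ \<delta>)" by simp
    moreover have "cmod (a * z ^ \<delta> + (p z - a * z ^ \<delta>)) \<le> cmod (a * z ^ \<delta>) + cmod (p z - a * z ^ \<delta>)" by (rule norm_triangle_ineq)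
    hence "cmod (p z) \<le> cmod (a * z ^ \<delta>) + cmod (p z - a * z ^ \<delta>)" by simp
    ultimately show "cmod a / 2 * cmod z ^ \<delta> \<le> cmod (p z) \<and> cmod (p z) \<le> 2 * cmod a * cmod z ^ \<delta>"
      using e az by (auto simp: field_simps)
  qed
qed

lemma p0: "p 0 = 0"
proof -
  obtain C \<epsilon> where \<epsilon>: "\<epsilon> > 0" and C: "\<And>z. cmod z < \<epsilon> \<Longrightarrow> cmod (p z - a * z ^ \<delta>) \<le> C * cmod z ^ (\<delta> + 1)"
    using p_expansion by blast
  have "cmod (p 0 - a * 0 ^ \<delta>) \<le> 0" using C[of 0] \<epsilon> by simp
  thus ?thesis using delta_ge by simp
qed

lemma q_ser: "\<exists>\<rho>. 0 < \<rho> \<and> \<rho> < 1 \<and> (\<lambda>(i, j). cmod (b i j) * \<rho> ^ (i + j)) summable_on UNIV \<and>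
   (\<forall>z w. cmod z \<le> \<rho> \<and> cmod w \<le> \<rho> \<longrightarrow> ((\<lambda>(i, j). b i j * z ^ i * w ^ j) has_sum q z w) UNIV)"
proof -
  obtain \<epsilon> where \<epsilon>: "\<epsilon> > 0" and ser: "\<forall>z w. cmod z < \<epsilon> \<and> cmod w < \<epsilon> \<longrightarrow>
          ((\<lambda>(i, j). b i j * z ^ i * w ^ j) has_sum q z w) UNIV" using q_series by blast
  define \<rho> where "\<rho> = min (\<epsilon> / 2) (1/2)"
  have \<rho>: "0 < \<rho>" "\<rho> < \<epsilon>" "\<rho> < 1" unfolding \<rho>_def using \<epsilon> by auto
  show ?thesis
    using series_abs[OF ser \<rho>(1,2)] \<rho> ser by (intro exI[of _ \<rho>]) force
qed

lemma q00: "q 0 0 = 0"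
proof -
  obtain \<rho> where \<rho>: "0 < \<rho>" and hs: "\<forall>z w. cmod z \<le> \<rho> \<and> cmod w \<le> \<rho> \<longrightarrow> ((\<lambda>(i, j). b i j * z ^ i * w ^ j) has_sum q z w) UNIV"
    using q_ser by blast
  have h: "((\<lambda>(i, j). b i j * 0 ^ i * 0 ^ j) has_sum q 0 0) UNIV" using hs \<rho> by auto
  have "((\<lambda>(i, j). b i j * (0::complex) ^ i * 0 ^ j) has_sum 0) UNIV"
  proof (rule has_sum_0)
    fix x :: "nat \<times> nat"
    obtain i j where x: "x = (i, j)" by (cases x)
    show "(\<lambda>(i, j). b i j * (0::complex) ^ i * 0 ^ j) x = 0"
      using b00 unfolding x by (cases "i = 0"; cases "j = 0") auto
  qed
  thus ?thesis using h has_sum_unique by blast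
qed

lemma Q2bound:
  assumes nm1: "(n 1, m 1) \<noteq> (0, \<delta>)"
  shows "\<exists>M0 K. 0 < M0 \<and> M0 \<le> 1 \<and> K \<ge> 0 \<and> (\<forall>z w. 0 < max (cmod z powr \<alpha>) (cmod w) \<and> max (cmod z powr \<alpha>) (cmod w) \<le> M0 \<longrightarrow>
      cmod (q z w) \<le> K * (cmod z * max (cmod z powr \<alpha>) (cmod w) powr (real \<delta> - 1/\<alpha>) + max (cmod z powr \<alpha>) (cmod w) powr (real \<delta> + 1)))"
proof -
  obtain \<rho> where \<rho>: "0 < \<rho>" "\<rho> < 1" and sm: "(\<lambda>(i, j). cmod (b i j) * \<rho> ^ (i + j)) summable_on UNIV"
    and hs: "\<forall>z w. cmod z \<le> \<rho> \<and> cmod w \<le> \<rho> \<longrightarrow> ((\<lambda>(i, j). b i j * z ^ i * w ^ j) has_sum q z w) UNIV"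
    using q_ser by blast
  define \<sigma> where "\<sigma> = infsum (\<lambda>(i, j). cmod (b i j) * \<rho> ^ (i + j)) UNIV"
  have \<sigma>: "\<sigma> \<ge> 0" unfolding \<sigma>_def by (rule infsum_nonneg) (use \<rho> in auto)
  define \<theta> where "\<theta> = min (1/\<alpha>) 1"
  have \<theta>: "\<theta> > 0" "\<theta> \<le> 1" "\<theta> * \<alpha> \<le> 1" unfolding \<theta>_def using alpha_pos by (auto simp: min_def field_simps)
  define M0 where "M0 = \<rho> powr (1/\<theta>)"
  have M0p: "M0 > 0" unfolding M0_def using \<rho> by simp
  have M0\<theta>: "M0 powr \<theta> = \<rho>" unfolding M0_def using \<rho> \<theta> by (simp add: powr_powr)
  have M0\<rho>: "M0 \<le> \<rho>"
  proof -
    have "\<rho> powr (1/\<theta>) \<le> \<rho> powr 1" using \<rho> \<theta> by (intro powr_mono') (auto simp: field_simps)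
    thus ?thesis unfolding M0_def using \<rho> by simp
  qed
  define K where "K = M0 powr (- (real \<delta> + 1)) * \<sigma>"
  have K: "K \<ge> 0" unfolding K_def using \<sigma> by simp
  have M01: "M0 \<le> 1" using M0\<rho> \<rho> by simp
  have main: "\<forall>z w. 0 < max (cmod z powr \<alpha>) (cmod w) \<and> max (cmod z powr \<alpha>) (cmod w) \<le> M0 \<longrightarrow>
      cmod (q z w) \<le> K * (cmod z * max (cmod z powr \<alpha>) (cmod w) powr (real \<delta> - 1/\<alpha>) + max (cmod z powr \<alpha>) (cmod w) powr (real \<delta> + 1))"
  proof (intro allI impI)
    fix z w
    define M where "M = max (cmod z powr \<alpha>) (cmod w)"
    assume "0 < max (cmod z powr \<alpha>) (cmod w) \<and> max (cmod z powr \<alpha>) (cmod w) \<le> M0"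
    hence Mp: "0 < M" "M \<le> M0" unfolding M_def by auto
    have wr: "cmod w \<le> \<rho>" using Mp M0\<rho> unfolding M_def by simp
    have "cmod z \<le> M powr (1/\<alpha>)" unfolding M_def by (rule Z_le_Mpow) (use alpha_pos in auto)
    also have "\<dots> \<le> M0 powr (1/\<alpha>)" using Mp alpha_pos by (intro powr_mono2) auto
    also have "\<dots> = \<rho> powr (1 / (\<theta> * \<alpha>))" unfolding M0_def using \<rho> by (simp add: powr_powr)
    also have "\<dots> \<le> \<rho> powr 1" using \<rho> \<theta> alpha_pos by (intro powr_mono') (auto simp: field_simps)
    finally have zr: "cmod z \<le> \<rho>" using \<rho> by simp
    have F: "((\<lambda>(i, j). b i j * z ^ i * w ^ j) has_sum q z w) UNIV" using hs zr wr by auto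
    define P where "P = cmod z * M powr (real \<delta> - 1/\<alpha>) + M powr (real \<delta> + 1)"
    have bnd: "norm ((\<lambda>(i, j). b i j * z ^ i * w ^ j) x) \<le> (M0 powr (- (real \<delta> + 1)) * P) * (\<lambda>(i, j). cmod (b i j) * \<rho> ^ (i + j)) x"
      for x :: "nat \<times> nat"
    proof -
      obtain i j where x: "x = (i, j)" by (cases x)
      show ?thesis
      proof (cases "b i j = 0")
        case True thus ?thesis using x by simp
      next
        case False
        have tb: "cmod z ^ i * cmod w ^ j \<le> M0 powr (- (real \<delta> + 1)) * (M0 powr \<theta>) ^ (i + j) * P"
          unfolding P_def \<theta>_def
          by (rule term_bound2[where Zv="cmod z" and Wv="cmod w" and \<alpha>=\<alpha> and M=M and M0=M0 and i=i and j=j and \<delta>=\<delta>])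
             (use alpha_pos Mp M0\<rho> \<rho> NP_cond[OF nm1 False] M_def in auto)
        have "norm (b i j * z ^ i * w ^ j) = cmod (b i j) * (cmod z ^ i * cmod w ^ j)"
          by (simp add: norm_mult norm_power)
        also have "\<dots> \<le> cmod (b i j) * (M0 powr (- (real \<delta> + 1)) * \<rho> ^ (i + j) * P)"
          using tb M0\<theta> by (intro mult_left_mono) auto
        finally show ?thesis using x by (simp add: mult_ac)
      qed
    qed
    have "cmod (q z w) \<le> (M0 powr (- (real \<delta> + 1)) * P) * \<sigma>"
      unfolding \<sigma>_def by (rule series_bound[OF F sm bnd])
    thus "cmod (q z w) \<le> K * (cmod z * max (cmod z powr \<alpha>) (cmod w) powr (real \<delta> - 1/\<alpha>) + max (cmod z powr \<alpha>) (cmod w) powr (real \<delta> + 1))"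
      unfolding K_def P_def M_def by (simp add: mult_ac)
  qed
  show ?thesis using M0p M01 K main by blast
qed

end

lemma U_iff:
  fixes \<zeta> \<omega> :: complex and r l1 l2 :: real
  assumes r: "0 < r" and l: "l1 > 0" "l2 > 0"
  shows "(\<zeta>, \<omega>) \<in> Uset l1 l2 r \<longleftrightarrow> cmod \<zeta> > 0 \<and> cmod \<omega> > 0 \<and>
     (l1 + l2) * ln (cmod \<zeta>) < l2 * ln r + ln (cmod \<omega>) \<and> ln (cmod \<omega>) < ln r + l1 * ln (cmod \<zeta>)"
proof
  assume U: "(\<zeta>, \<omega>) \<in> Uset l1 l2 r"
  hence u1: "cmod \<zeta> powr (l1 + l2) < r powr l2 * cmod \<omega>" and u2: "cmod \<omega> < r * cmod \<zeta> powr l1"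
    unfolding Uset_def by auto
  have "r powr l2 * cmod \<omega> > 0" using u1 by (smt (verit) powr_ge_zero)
  hence W: "cmod \<omega> > 0" using r by (simp add: zero_less_mult_iff)
  have "r * cmod \<zeta> powr l1 > 0" using u2 by (smt (verit) norm_ge_zero)
  hence Z: "cmod \<zeta> > 0" using r by (simp add: zero_less_mult_iff)
  have "ln (cmod \<zeta> powr (l1 + l2)) < ln (r powr l2 * cmod \<omega>)" using u1 Z W r by (subst ln_less_cancel_iff) auto
  hence "(l1 + l2) * ln (cmod \<zeta>) < l2 * ln r + ln (cmod \<omega>)" using Z W r by (simp add: ln_mult ln_powr)
  moreover have "ln (cmod \<omega>) < ln (r * cmod \<zeta> powr l1)" using u2 Z W r by (subst ln_less_cancel_iff) auto
  hence "ln (cmod \<omega>) < ln r + l1 * ln (cmod \<zeta>)" using Z W r by (simp add: ln_mult ln_powr)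
  ultimately show "cmod \<zeta> > 0 \<and> cmod \<omega> > 0 \<and>
     (l1 + l2) * ln (cmod \<zeta>) < l2 * ln r + ln (cmod \<omega>) \<and> ln (cmod \<omega>) < ln r + l1 * ln (cmod \<zeta>)"
    using Z W by auto
next
  assume h: "cmod \<zeta> > 0 \<and> cmod \<omega> > 0 \<and>
     (l1 + l2) * ln (cmod \<zeta>) < l2 * ln r + ln (cmod \<omega>) \<and> ln (cmod \<omega>) < ln r + l1 * ln (cmod \<zeta>)"
  hence Z: "cmod \<zeta> > 0" and W: "cmod \<omega> > 0" by auto
  have "ln (cmod \<zeta> powr (l1 + l2)) < ln (r powr l2 * cmod \<omega>)" using h Z W r by (simp add: ln_mult ln_powr)
  hence u1: "cmod \<zeta> powr (l1 + l2) < r powr l2 * cmod \<omega>" using Z W r by (subst (asm) ln_less_cancel_iff) auto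
  have "ln (cmod \<omega>) < ln (r * cmod \<zeta> powr l1)" using h Z W r by (simp add: ln_mult ln_powr)
  hence u2: "cmod \<omega> < r * cmod \<zeta> powr l1" using Z W r by (subst (asm) ln_less_cancel_iff) auto
  show "(\<zeta>, \<omega>) \<in> Uset l1 l2 r" unfolding Uset_def using u1 u2 by auto
qed

lemma rp:
  fixes r C t :: real
  assumes "0 < r" "r \<le> C powr (1/t)" "t > 0" "C > 0"
  shows "r powr t \<le> C"
proof -
  have "r powr t \<le> (C powr (1/t)) powr t" using assms by (intro powr_mono2) auto
  also have "\<dots> = C" using assms by (simp add: powr_powr)
  finally show ?thesis .
qed

lemma cancel3: "(c::real) \<noteq> 0 \<Longrightarrow> A / (2 * c) * c = A / 2" by simp

context setting begin

lemma U_basic: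
  assumes r: "0 < r" "r < 1" and U: "(\<zeta>, \<omega>) \<in> Uset l1 l2 r"
  shows "cmod \<zeta> > 0" "cmod \<omega> > 0" "cmod \<zeta> < r" "cmod \<omega> < r"
    "(l1 + l2) * ln (cmod \<zeta>) < l2 * ln r + ln (cmod \<omega>)" "ln (cmod \<omega>) < ln r + l1 * ln (cmod \<zeta>)"
proof -
  note h = U[unfolded U_iff[OF r(1) l1_pos l2_pos]]
  show Z: "cmod \<zeta> > 0" and W: "cmod \<omega> > 0" using h by auto
  show u1: "(l1 + l2) * ln (cmod \<zeta>) < l2 * ln r + ln (cmod \<omega>)"
    and u2: "ln (cmod \<omega>) < ln r + l1 * ln (cmod \<zeta>)" using h by auto
  have R: "ln r < 0" using r by simp
  have "l2 * ln (cmod \<zeta>) < l2 * ln r + ln r" using u1 u2 l1_pos by (simp add: algebra_simps)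
  hence "l2 * ln (cmod \<zeta>) < l2 * ln r" using R by linarith
  hence X: "ln (cmod \<zeta>) < ln r" using l2_pos by simp
  thus "cmod \<zeta> < r" using Z r by simp
  have "l1 * ln (cmod \<zeta>) < 0" using X R l1_pos by (simp add: mult_pos_neg)
  hence "ln (cmod \<omega>) < ln r" using u2 by linarith
  thus "cmod \<omega> < r" using W r by simp
qed

lemma Q1bound: "\<exists>r1>0. r1 < 1 \<and> (\<forall>r \<zeta> \<omega>. 0 < r \<and> r < r1 \<and> (\<zeta>, \<omega>) \<in> Uset l1 l2 r \<longrightarrow>
    cmod (q \<zeta> \<omega> - b (n k) (m k) * \<zeta> ^ n k * \<omega> ^ m k) \<le> cmod (b (n k) (m k)) / 2 * (cmod \<zeta> ^ n k * cmod \<omega> ^ m k))"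
proof -
  obtain \<rho> where \<rho>: "0 < \<rho>" "\<rho> < 1" and sm: "(\<lambda>(i, j). cmod (b i j) * \<rho> ^ (i + j)) summable_on UNIV"
    and hs: "\<forall>z w. cmod z \<le> \<rho> \<and> cmod w \<le> \<rho> \<longrightarrow> ((\<lambda>(i, j). b i j * z ^ i * w ^ j) has_sum q z w) UNIV"
    using q_ser by blast
  define \<sigma> where "\<sigma> = infsum (\<lambda>(i, j). cmod (b i j) * \<rho> ^ (i + j)) UNIV"
  have \<sigma>: "\<sigma> \<ge> 0" unfolding \<sigma>_def by (rule infsum_nonneg) (use \<rho> in auto)
  define \<gamma> where "\<gamma> = n k"
  define d where "d = m k"
  define b0 where "b0 = b \<gamma> d"
  have b0: "cmod b0 > 0" unfolding b0_def \<gamma>_def d_def using b0_nz by simp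
  define \<kappa>0 where "\<kappa>0 = min 1 l2"
  define c where "c = \<kappa>0 / (\<kappa>0 + (real \<gamma> + (l1 + 1) * real d))"
  have \<kappa>0: "\<kappa>0 > 0" unfolding \<kappa>0_def using l2_pos by simp
  have "(l1 + 1) * real d \<ge> 0" using l1_pos by simp
  hence c: "c > 0" unfolding c_def using \<kappa>0 by (intro divide_pos_pos) auto
  define B where "B = cmod b0 / (2 * (\<sigma> + 1))"
  have B: "B > 0" unfolding B_def using b0 \<sigma> by simp
  define r1 where "r1 = min (1/2) (min \<rho> (min (\<rho> powr (1 / (c / 2))) (B powr (1 / (\<kappa>0 / 2)))))"
  have r1: "r1 > 0" "r1 < 1" unfolding r1_def using \<rho> B by auto
  have main: "cmod (q \<zeta> \<omega> - b0 * \<zeta> ^ \<gamma> * \<omega> ^ d) \<le> cmod b0 / 2 * (cmod \<zeta> ^ \<gamma> * cmod \<omega> ^ d)"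
    if r: "0 < r" "r < r1" and U: "(\<zeta>, \<omega>) \<in> Uset l1 l2 r" for r \<zeta> \<omega>
  proof -
    have r01: "r < 1" using r r1 by simp
    note ub = U_basic[OF r(1) r01 U]
    have rr: "r \<le> \<rho>" "r \<le> \<rho> powr (1 / (c / 2))" "r \<le> B powr (1 / (\<kappa>0 / 2))" using r unfolding r1_def by auto
    have rc: "r powr (c / 2) \<le> \<rho>" by (rule rp[OF r(1) rr(2)]) (use c \<rho> in auto)
    have r\<kappa>: "r powr (\<kappa>0 / 2) \<le> B" by (rule rp[OF r(1) rr(3)]) (use \<kappa>0 B in auto)
    have F: "((\<lambda>(i, j). b i j * \<zeta> ^ i * \<omega> ^ j) has_sum q \<zeta> \<omega>) UNIV" using hs ub(3,4) rr(1) by auto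
    from has_sum_remove1[OF F, of "(\<gamma>, d)"]
    have F': "((\<lambda>x. if x = (\<gamma>, d) then 0 else (\<lambda>(i, j). b i j * \<zeta> ^ i * \<omega> ^ j) x) has_sum (q \<zeta> \<omega> - b0 * \<zeta> ^ \<gamma> * \<omega> ^ d)) UNIV"
      unfolding b0_def by simp
    define W where "W = cmod \<zeta> ^ \<gamma> * cmod \<omega> ^ d * r powr \<kappa>0 / 2 * 0 + cmod \<zeta> ^ \<gamma> * cmod \<omega> ^ d * r powr (\<kappa>0 / 2)"
    have W0: "W \<ge> 0" unfolding W_def by simp
    have bnd: "norm ((\<lambda>x. if x = (\<gamma>, d) then 0 else (\<lambda>(i, j). b i j * \<zeta> ^ i * \<omega> ^ j) x) x)
        \<le> W * (\<lambda>(i, j). cmod (b i j) * \<rho> ^ (i + j)) x" for x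
    proof -
      obtain i j where x: "x = (i, j)" by (cases x)
      show ?thesis
      proof (cases "x = (\<gamma>, d) \<or> b i j = 0")
        case True
        thus ?thesis using x W0 \<rho> by auto
      next
        case False
        hence ne: "(i, j) \<noteq> (\<gamma>, d)" and bij: "b i j \<noteq> 0" using x by auto
        have NP1: "real i + l1 * real j \<ge> real \<gamma> + l1 * real d"
          unfolding \<gamma>_def d_def by (rule NPl[OF _ _ bij]) (use l2_pos in auto)
        have NP2: "real i + (l1 + l2) * real j \<ge> real \<gamma> + (l1 + l2) * real d"
          unfolding \<gamma>_def d_def by (rule NPl[OF _ _ bij]) (use l2_pos in auto)
        have tb: "cmod \<zeta> ^ i * cmod \<omega> ^ j \<le> cmod \<zeta> ^ \<gamma> * cmod \<omega> ^ d * r powr (\<kappa>0 / 2) * (r powr (c / 2)) ^ (i + j)"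
          unfolding \<kappa>0_def c_def
          by (rule term_bound1'[OF ub(1) ub(2) r(1) r01 _ l1_pos l2_pos ub(5) ub(6) NP1 NP2 ne]) (use ub in simp)
        also have "\<dots> \<le> cmod \<zeta> ^ \<gamma> * cmod \<omega> ^ d * r powr (\<kappa>0 / 2) * \<rho> ^ (i + j)"
          using rc by (intro mult_left_mono power_mono) auto
        finally have tb': "cmod \<zeta> ^ i * cmod \<omega> ^ j \<le> W * \<rho> ^ (i + j)" unfolding W_def by simp
        have "norm (b i j * \<zeta> ^ i * \<omega> ^ j) = cmod (b i j) * (cmod \<zeta> ^ i * cmod \<omega> ^ j)"
          by (simp add: norm_mult norm_power)
        also have "\<dots> \<le> cmod (b i j) * (W * \<rho> ^ (i + j))" using tb' by (intro mult_left_mono) auto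
        finally have "norm (b i j * \<zeta> ^ i * \<omega> ^ j) \<le> cmod (b i j) * (W * \<rho> ^ (i + j))" .
        thus ?thesis using x ne by (auto simp: mult_ac)
      qed
    qed
    have "cmod (q \<zeta> \<omega> - b0 * \<zeta> ^ \<gamma> * \<omega> ^ d) \<le> W * \<sigma>"
      unfolding \<sigma>_def by (rule series_bound[OF F' sm bnd])
    also have "W * \<sigma> = cmod \<zeta> ^ \<gamma> * cmod \<omega> ^ d * (r powr (\<kappa>0 / 2) * \<sigma>)" unfolding W_def by simp
    also have "r powr (\<kappa>0 / 2) * \<sigma> \<le> B * \<sigma>" using r\<kappa> \<sigma> by (intro mult_right_mono) auto
    hence "r powr (\<kappa>0 / 2) * \<sigma> \<le> cmod b0 / 2"
    proof -
      have "B * \<sigma> \<le> B * (\<sigma> + 1)" using B by simp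
      also have "\<dots> = cmod b0 / 2" unfolding B_def using \<sigma> cancel3[of "\<sigma> + 1" "cmod b0"] by simp
      finally show ?thesis using \<open>r powr (\<kappa>0 / 2) * \<sigma> \<le> B * \<sigma>\<close> by linarith
    qed
    hence "cmod \<zeta> ^ \<gamma> * cmod \<omega> ^ d * (r powr (\<kappa>0 / 2) * \<sigma>) \<le> cmod \<zeta> ^ \<gamma> * cmod \<omega> ^ d * (cmod b0 / 2)"
      by (intro mult_left_mono) auto
    finally show ?thesis by (simp add: mult_ac)
  qed
  show ?thesis using r1 main unfolding b0_def \<gamma>_def d_def by blast
qed

end

context setting begin

lemma U_step:
  assumes hyp: "m k \<ge> 2 \<or> (intercept n m k < real \<delta> \<and> real \<delta> < intercept n m (k - 1))"
  shows "\<exists>r0>0. \<forall>r \<zeta> \<omega>. 0 < r \<and> r < r0 \<and> (\<zeta>, \<omega>) \<in> Uset l1 l2 r \<longrightarrow>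
     (p \<zeta>, q \<zeta> \<omega>) \<in> Uset l1 l2 r \<and>
     cmod a / 2 * cmod \<zeta> ^ \<delta> \<le> cmod (p \<zeta>) \<and> cmod (p \<zeta>) \<le> 2 * cmod a * cmod \<zeta> ^ \<delta> \<and>
     cmod (b (n k) (m k)) / 2 * (cmod \<zeta> ^ n k * cmod \<omega> ^ m k) \<le> cmod (q \<zeta> \<omega>) \<and>
     cmod (q \<zeta> \<omega>) \<le> 3 * cmod (b (n k) (m k)) / 2 * (cmod \<zeta> ^ n k * cmod \<omega> ^ m k)"
proof -
  obtain \<tau> where \<tau>: "\<tau> > 0" and pb: "\<And>z. cmod z < \<tau> \<Longrightarrow>
    cmod a / 2 * cmod z ^ \<delta> \<le> cmod (p z) \<and> cmod (p z) \<le> 2 * cmod a * cmod z ^ \<delta>"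
    using p_bounds by blast
  obtain r1 where r1: "r1 > 0" "r1 < 1" and qb: "\<And>r \<zeta> \<omega>. 0 < r \<Longrightarrow> r < r1 \<Longrightarrow> (\<zeta>, \<omega>) \<in> Uset l1 l2 r \<Longrightarrow>
    cmod (q \<zeta> \<omega> - b (n k) (m k) * \<zeta> ^ n k * \<omega> ^ m k) \<le> cmod (b (n k) (m k)) / 2 * (cmod \<zeta> ^ n k * cmod \<omega> ^ m k)"
    using Q1bound by blast
  define \<gamma> where "\<gamma> = n k"
  define d where "d = m k"
  define b0 where "b0 = b \<gamma> d"
  define L where "L = l1 + l2"
  have b0: "cmod b0 > 0" unfolding b0_def \<gamma>_def d_def using b0_nz by simp
  have Lp: "L > 0" unfolding L_def using l1_pos l2_pos by simp
  have d1: "real d \<ge> 1" unfolding d_def using mk_pos by simp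
  define e1 where "e1 = L * (real \<delta> - real d) - real \<gamma>"
  define e2 where "e2 = real \<gamma> - l1 * (real \<delta> - real d)"
  have ag: "\<alpha> * (real \<delta> - real d) = real \<gamma>" unfolding \<gamma>_def d_def by (rule alpha_eq)
  have dd: "real \<delta> - real d > 0" unfolding d_def by (rule dd_pos)
  have e1: "e1 \<ge> 0"
  proof -
    have "\<alpha> * (real \<delta> - real d) \<le> L * (real \<delta> - real d)" unfolding L_def using alpha_le_L dd
      by (intro mult_right_mono) auto
    thus ?thesis unfolding e1_def using ag by simp
  qed
  have e2: "e2 \<ge> 0"
  proof -
    have "l1 * (real \<delta> - real d) \<le> \<alpha> * (real \<delta> - real d)" using l1_le_alpha dd
      by (intro mult_right_mono) auto
    thus ?thesis unfolding e2_def using ag by simp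
  qed
  define EA where "EA = e1 + (real d - 1) * l2"
  define EB where "EB = e2 + (real d - 1)"
  have EAB: "EA > 0 \<and> EB > 0"
  proof (cases "m k \<ge> 2")
    case True
    hence "real d - 1 \<ge> 1" unfolding d_def by simp
    hence h: "(real d - 1) * l2 \<ge> 1 * l2" using l2_pos by (intro mult_right_mono) auto
    have "EA > 0" unfolding EA_def using e1 h l2_pos by linarith
    moreover have "EB > 0" unfolding EB_def using e2 \<open>real d - 1 \<ge> 1\<close> by linarith
    ultimately show ?thesis by simp
  next
    case False
    hence st: "intercept n m k < real \<delta>" "real \<delta> < intercept n m (k - 1)" using hyp by auto
    have "real (n k) / (l1 + l2) < real \<delta> - real (m k)" using st(1) Tk by simp
    hence "real \<gamma> < L * (real \<delta> - real d)" unfolding L_def \<gamma>_def d_def using Lp[unfolded L_def]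
      by (simp add: divide_less_eq mult.commute)
    hence e1p: "e1 > 0" unfolding e1_def by simp
    have "real \<delta> - real (m k) < real (n k) / l1" using st(2) Tk1 by simp
    hence "l1 * (real \<delta> - real d) < real \<gamma>" unfolding \<gamma>_def d_def using l1_pos
      by (simp add: less_divide_eq mult.commute)
    hence e2p: "e2 > 0" unfolding e2_def by simp
    have h: "(real d - 1) * l2 \<ge> 0" using d1 l2_pos by simp
    have "EA > 0" unfolding EA_def using e1p h by linarith
    moreover have "EB > 0" unfolding EB_def using e2p d1 by linarith
    ultimately show ?thesis by simp
  qed
  define c1 where "c1 = cmod a / 2"
  define c2 where "c2 = 2 * cmod a"
  define f1 where "f1 = cmod b0 / 2"
  define f2 where "f2 = 3 * cmod b0 / 2"
  have cpos: "c1 > 0" "c2 > 0" "f1 > 0" "f2 > 0" unfolding c1_def c2_def f1_def f2_def using a_nz b0 by auto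
  define CA where "CA = L * ln c2 - ln f1"
  define CB where "CB = ln f2 - l1 * ln c1"
  define r0 where "r0 = min r1 (min \<tau> (min (exp (- CA / EA)) (exp (- CB / EB))))"
  have r0: "r0 > 0" unfolding r0_def using r1 \<tau> by auto
  show ?thesis
  proof (rule exI[of _ r0], rule conjI[OF r0], intro allI impI)
    fix r \<zeta> \<omega> assume h: "0 < r \<and> r < r0 \<and> (\<zeta>, \<omega>) \<in> Uset l1 l2 r"
    hence r: "0 < r" "r < r0" and U: "(\<zeta>, \<omega>) \<in> Uset l1 l2 r" by auto
    have rr: "r < r1" "r < \<tau>" "r \<le> exp (- CA / EA)" "r \<le> exp (- CB / EB)" using r unfolding r0_def by auto
    have r01: "r < 1" using rr r1 by simp
    note ub = U_basic[OF r(1) r01 U]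
    define Z where "Z = cmod \<zeta>"
    define W where "W = cmod \<omega>"
    define Z1 where "Z1 = cmod (p \<zeta>)"
    define W1 where "W1 = cmod (q \<zeta> \<omega>)"
    have ZW: "Z > 0" "W > 0" unfolding Z_def W_def using ub by auto
    have pbz: "c1 * Z ^ \<delta> \<le> Z1" "Z1 \<le> c2 * Z ^ \<delta>" using pb[of \<zeta>] ub(3) rr(2)
      unfolding Z_def Z1_def c1_def c2_def by auto
    have qd: "cmod (q \<zeta> \<omega> - b0 * \<zeta> ^ \<gamma> * \<omega> ^ d) \<le> cmod b0 / 2 * (Z ^ \<gamma> * W ^ d)"
      using qb[OF r(1) rr(1) U] unfolding b0_def \<gamma>_def d_def Z_def W_def .
    have nb: "cmod (b0 * \<zeta> ^ \<gamma> * \<omega> ^ d) = cmod b0 * (Z ^ \<gamma> * W ^ d)"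
      unfolding Z_def W_def by (simp add: norm_mult norm_power)
    have "cmod (q \<zeta> \<omega> - (q \<zeta> \<omega> - b0 * \<zeta> ^ \<gamma> * \<omega> ^ d)) \<le> cmod (q \<zeta> \<omega>) + cmod (q \<zeta> \<omega> - b0 * \<zeta> ^ \<gamma> * \<omega> ^ d)"
      by (rule norm_triangle_ineq4)
    hence qlow: "f1 * (Z ^ \<gamma> * W ^ d) \<le> W1" using qd nb unfolding W1_def f1_def by simp
    have "cmod (b0 * \<zeta> ^ \<gamma> * \<omega> ^ d + (q \<zeta> \<omega> - b0 * \<zeta> ^ \<gamma> * \<omega> ^ d)) \<le> cmod (b0 * \<zeta> ^ \<gamma> * \<omega> ^ d) + cmod (q \<zeta> \<omega> - b0 * \<zeta> ^ \<gamma> * \<omega> ^ d)"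
      by (rule norm_triangle_ineq)
    hence qup: "W1 \<le> f2 * (Z ^ \<gamma> * W ^ d)" using qd nb unfolding W1_def f2_def by simp
    have Z1p: "Z1 > 0" using pbz cpos ZW by (smt (verit) mult_pos_pos zero_less_power)
    have W1p: "W1 > 0" using qlow cpos ZW by (smt (verit) mult_pos_pos zero_less_power)
    define X where "X = ln Z"
    define Y where "Y = ln W"
    define R where "R = ln r"
    define X1 where "X1 = ln Z1"
    define Y1 where "Y1 = ln W1"
    have XR: "X < R" unfolding X_def R_def Z_def using ub(1,3) r(1) by (subst ln_less_cancel_iff) auto
    have U1: "L * X < l2 * R + Y" and U2: "Y < R + l1 * X" using ub(5,6) unfolding L_def X_def Y_def R_def Z_def W_def by auto
    have lnX1: "ln c1 + real \<delta> * X \<le> X1" "X1 \<le> ln c2 + real \<delta> * X"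
    proof -
      have "ln (c1 * Z ^ \<delta>) \<le> ln Z1" using pbz cpos ZW Z1p by (subst ln_le_cancel_iff) auto
      thus "ln c1 + real \<delta> * X \<le> X1" unfolding X_def X1_def using cpos ZW by (simp add: ln_mult ln_realpow)
      have "ln Z1 \<le> ln (c2 * Z ^ \<delta>)" using pbz cpos ZW Z1p by (subst ln_le_cancel_iff) auto
      thus "X1 \<le> ln c2 + real \<delta> * X" unfolding X_def X1_def using cpos ZW by (simp add: ln_mult ln_realpow)
    qed
    have lnY1: "ln f1 + real \<gamma> * X + real d * Y \<le> Y1" "Y1 \<le> ln f2 + real \<gamma> * X + real d * Y"
    proof -
      have "ln (f1 * (Z ^ \<gamma> * W ^ d)) \<le> ln W1" using qlow cpos ZW W1p by (subst ln_le_cancel_iff) auto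
      thus "ln f1 + real \<gamma> * X + real d * Y \<le> Y1" unfolding X_def Y_def Y1_def using cpos ZW by (simp add: ln_mult ln_realpow)
      have "ln W1 \<le> ln (f2 * (Z ^ \<gamma> * W ^ d))" using qup cpos ZW W1p by (subst ln_le_cancel_iff) auto
      thus "Y1 \<le> ln f2 + real \<gamma> * X + real d * Y" unfolding X_def Y_def Y1_def using cpos ZW by (simp add: ln_mult ln_realpow)
    qed
    have RA: "EA * R \<le> - CA"
    proof -
      have "R \<le> - CA / EA" unfolding R_def using rr(3) r by (metis ln_exp ln_le_cancel_iff exp_gt_zero)
      hence "EA * R \<le> EA * (- CA / EA)" using EAB by (intro mult_left_mono) auto
      thus ?thesis using EAB by simp
    qed
    have RB: "EB * R \<le> - CB"
    proof -
      have "R \<le> - CB / EB" unfolding R_def using rr(4) r by (metis ln_exp ln_le_cancel_iff exp_gt_zero)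
      hence "EB * R \<le> EB * (- CB / EB)" using EAB by (intro mult_left_mono) auto
      thus ?thesis using EAB by simp
    qed
    have A1: "L * X1 \<le> L * (ln c2 + real \<delta> * X)" using lnX1(2) Lp by (intro mult_left_mono) auto
    have A2: "real d * (L * X - l2 * R) < real d * Y" using U1 d1 by (intro mult_strict_left_mono) auto
    have A3: "e1 * X \<le> e1 * R" using XR e1 by (intro mult_left_mono) auto
    have goalA: "L * X1 < l2 * R + Y1"
      using A1 A2 A3 RA lnY1(1) unfolding EA_def CA_def e1_def by (simp add: algebra_simps)
    have B2: "real d * Y < real d * (R + l1 * X)" using U2 d1 by (intro mult_strict_left_mono) auto
    have B3: "l1 * (ln c1 + real \<delta> * X) \<le> l1 * X1" using lnX1(1) l1_pos by (intro mult_left_mono) auto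
    have B4: "e2 * X \<le> e2 * R" using XR e2 by (intro mult_left_mono) auto
    have goalB: "Y1 < R + l1 * X1"
      using lnY1(2) B2 B3 B4 RB unfolding EB_def CB_def e2_def by (simp add: algebra_simps)
    have "(p \<zeta>, q \<zeta> \<omega>) \<in> Uset l1 l2 r"
      unfolding U_iff[OF r(1) l1_pos l2_pos]
      using Z1p W1p goalA goalB unfolding Z1_def W1_def X1_def Y1_def R_def L_def by auto
    thus "(p \<zeta>, q \<zeta> \<omega>) \<in> Uset l1 l2 r \<and>
     cmod a / 2 * cmod \<zeta> ^ \<delta> \<le> cmod (p \<zeta>) \<and> cmod (p \<zeta>) \<le> 2 * cmod a * cmod \<zeta> ^ \<delta> \<and>
     cmod (b (n k) (m k)) / 2 * (cmod \<zeta> ^ n k * cmod \<omega> ^ m k) \<le> cmod (q \<zeta> \<omega>) \<and>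
     cmod (q \<zeta> \<omega>) \<le> 3 * cmod (b (n k) (m k)) / 2 * (cmod \<zeta> ^ n k * cmod \<omega> ^ m k)"
      using pbz qlow qup unfolding Z_def W_def Z1_def W1_def c1_def c2_def f1_def f2_def b0_def \<gamma>_def d_def
      by auto
  qed
qed

end

lemma skew_app: "skew p q (z, w) = (p z, q z w)" by (simp add: skew_def)

lemma orbit_Suc: "(skew p q ^^ Suc j) x = skew p q ((skew p q ^^ j) x)" by simp

lemma orbit_fst_Suc: "fst ((skew p q ^^ Suc j) x) = p (fst ((skew p q ^^ j) x))"
  by (cases "(skew p q ^^ j) x") (simp add: skew_def)

lemma orbit_snd_Suc: "snd ((skew p q ^^ Suc j) x) = q (fst ((skew p q ^^ j) x)) (snd ((skew p q ^^ j) x))"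
  by (cases "(skew p q ^^ j) x") (simp add: skew_def)

lemma orbit_fst: "fst ((skew p q ^^ j) x) = (p ^^ j) (fst x)"
proof (induction j)
  case 0 show ?case by simp
next
  case (Suc j)
  have "fst ((skew p q ^^ Suc j) x) = p (fst ((skew p q ^^ j) x))" by (rule orbit_fst_Suc)
  also have "\<dots> = (p ^^ Suc j) (fst x)" using Suc by simp
  finally show ?case .
qed

context setting begin

lemma part1:
  assumes hyp: "m k \<ge> 2 \<or> (intercept n m k < real \<delta> \<and> real \<delta> < intercept n m (k - 1))"
  shows "\<exists>r0>0. \<forall>r. 0 < r \<and> r < r0 \<longrightarrow>
             (\<forall>(z, w) \<in> Af Dz (skew p q) (Uset l1 l2 r).
                \<exists>g. green_seq \<delta> (\<lambda>j. cmod ((p ^^ j) z)) \<longlonglongrightarrow> g \<and>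
                    green_seq \<delta> (\<lambda>j. cmod (snd ((skew p q ^^ j) (z, w)))) \<longlonglongrightarrow> ereal \<alpha> * g)"
proof -
  obtain r0 where r0: "r0 > 0" and st: "\<And>r \<zeta> \<omega>. 0 < r \<Longrightarrow> r < r0 \<Longrightarrow> (\<zeta>, \<omega>) \<in> Uset l1 l2 r \<Longrightarrow>
     (p \<zeta>, q \<zeta> \<omega>) \<in> Uset l1 l2 r \<and>
     cmod a / 2 * cmod \<zeta> ^ \<delta> \<le> cmod (p \<zeta>) \<and> cmod (p \<zeta>) \<le> 2 * cmod a * cmod \<zeta> ^ \<delta> \<and>
     cmod (b (n k) (m k)) / 2 * (cmod \<zeta> ^ n k * cmod \<omega> ^ m k) \<le> cmod (q \<zeta> \<omega>) \<and>
     cmod (q \<zeta> \<omega>) \<le> 3 * cmod (b (n k) (m k)) / 2 * (cmod \<zeta> ^ n k * cmod \<omega> ^ m k)"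
    using U_step[OF hyp] by blast
  define r0' where "r0' = min r0 (1/2)"
  have dpos: "\<delta> > 0" using delta_ge by simp
  show ?thesis
  proof (rule exI[of _ r0'], rule conjI, use r0 in \<open>simp add: r0'_def\<close>, intro allI impI ballI)
    fix r x assume r: "0 < r \<and> r < r0'" and x: "x \<in> Af Dz (skew p q) (Uset l1 l2 r)"
    have rr: "0 < r" "r < r0" "r < 1" using r unfolding r0'_def by auto
    obtain z w where xzw: "x = (z, w)" by (cases x)
    from x obtain N where N: "(skew p q ^^ N) (z, w) \<in> Uset l1 l2 r" unfolding Af_def xzw by blast
    define orb where "orb j = (skew p q ^^ (j + N)) (z, w)" for j
    have oS: "orb (Suc j) = (p (fst (orb j)), q (fst (orb j)) (snd (orb j)))" for j
      unfolding orb_def by (cases "(skew p q ^^ (j + N)) (z, w)") (simp add: skew_def)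
    have oU: "orb j \<in> Uset l1 l2 r" for j
    proof (induction j)
      case 0 thus ?case using N unfolding orb_def by simp
    next
      case (Suc j)
      thus ?case using st[OF rr(1,2), of "fst (orb j)" "snd (orb j)"] oS[of j] by simp
    qed
    define Zs where "Zs j = cmod (fst (orb j))" for j
    define Ws where "Ws j = cmod (snd (orb j))" for j
    have bnds: "cmod a / 2 * Zs j ^ \<delta> \<le> Zs (Suc j) \<and> Zs (Suc j) \<le> 2 * cmod a * Zs j ^ \<delta> \<and>
       cmod (b (n k) (m k)) / 2 * (Zs j ^ n k * Ws j ^ m k) \<le> Ws (Suc j) \<and>
       Ws (Suc j) \<le> 3 * cmod (b (n k) (m k)) / 2 * (Zs j ^ n k * Ws j ^ m k)" for j
      using st[OF rr(1,2), of "fst (orb j)" "snd (orb j)"] oU[of j] oS[of j] unfolding Zs_def Ws_def by simp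
    have pos: "Zs j > 0" "Ws j > 0" for j
      using U_basic[OF rr(1,3), of "fst (orb j)" "snd (orb j)"] oU[of j] unfolding Zs_def Ws_def by auto
    have dlt: "m k < \<delta>" using dd_pos by simp
    obtain g where gZ: "(\<lambda>j. ln (Zs j) / real \<delta> ^ j) \<longlonglongrightarrow> g"
      and gW: "(\<lambda>j. ln (Ws j) / real \<delta> ^ j) \<longlonglongrightarrow> real (n k) / (real \<delta> - real (m k)) * g"
      using part1_seq[of Zs Ws "cmod a / 2" "cmod (b (n k) (m k)) / 2" \<delta> "2 * cmod a" "n k" "m k"
          "3 * cmod (b (n k) (m k)) / 2", OF pos(1) pos(2) _ _ _ _ _ _ dlt delta_ge]
        bnds a_nz b0_nz by auto
    have gZ': "green_seq \<delta> Zs \<longlonglongrightarrow> ereal g" by (rule green_real[OF pos(1) dpos gZ])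
    have gW': "green_seq \<delta> Ws \<longlonglongrightarrow> ereal (\<alpha> * g)" using green_real[OF pos(2) dpos gW] alpha_def by simp
    have eZ: "Zs = (\<lambda>j. cmod ((p ^^ (j + N)) z))" unfolding Zs_def orb_def using orbit_fst by (auto simp: fun_eq_iff)
    have eW: "Ws = (\<lambda>j. cmod (snd ((skew p q ^^ (j + N)) (z, w))))" unfolding Ws_def orb_def by auto
    have l1: "green_seq \<delta> (\<lambda>j. cmod ((p ^^ j) z)) \<longlonglongrightarrow> ereal (1 / real \<delta> ^ N) * ereal g"
      by (rule green_shift[OF dpos]) (use gZ' eZ in simp)
    have l2: "green_seq \<delta> (\<lambda>j. cmod (snd ((skew p q ^^ j) (z, w)))) \<longlonglongrightarrow> ereal (1 / real \<delta> ^ N) * ereal (\<alpha> * g)"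
      by (rule green_shift[OF dpos]) (use gW' eW in simp)
    have "ereal (1 / real \<delta> ^ N) * ereal (\<alpha> * g) = ereal \<alpha> * (ereal (1 / real \<delta> ^ N) * ereal g)" by simp
    hence "green_seq \<delta> (\<lambda>j. cmod (snd ((skew p q ^^ j) (z, w)))) \<longlonglongrightarrow> ereal \<alpha> * (ereal (1 / real \<delta> ^ N) * ereal g)"
      using l2 by simp
    thus "case x of (z, w) \<Rightarrow> \<exists>g. green_seq \<delta> (\<lambda>j. cmod ((p ^^ j) z)) \<longlonglongrightarrow> g \<and>
                    green_seq \<delta> (\<lambda>j. cmod (snd ((skew p q ^^ j) (z, w)))) \<longlonglongrightarrow> ereal \<alpha> * g"
      using l1 xzw by auto
  qed
qed

end

context setting begin

lemma part2:
  assumes nm1: "(n 1, m 1) \<noteq> (0, \<delta>)"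
  shows "\<forall>x \<in> basin0 Dz (skew p q).
                \<exists>g. green_seq \<delta> (\<lambda>j. cmod ((p ^^ j) (fst x))) \<longlonglongrightarrow> g \<and>
                    green_seq \<delta> (\<lambda>j. max (cmod (fst ((skew p q ^^ j) x)) powr \<alpha>)
                                          (cmod (snd ((skew p q ^^ j) x)))) \<longlonglongrightarrow> ereal \<alpha> * g"
proof
  fix x assume x: "x \<in> basin0 Dz (skew p q)"
  have dpos: "\<delta> > 0" using delta_ge by simp
  obtain M0 K where M0: "0 < M0" "M0 \<le> 1" and K: "K \<ge> 0" and QB: "\<And>z w. 0 < max (cmod z powr \<alpha>) (cmod w) \<Longrightarrow> max (cmod z powr \<alpha>) (cmod w) \<le> M0 \<Longrightarrow>
      cmod (q z w) \<le> K * (cmod z * max (cmod z powr \<alpha>) (cmod w) powr (real \<delta> - 1/\<alpha>) + max (cmod z powr \<alpha>) (cmod w) powr (real \<delta> + 1))"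
    using Q2bound[OF nm1] by blast
  obtain \<tau> where \<tau>: "\<tau> > 0" and pb: "\<And>z. cmod z < \<tau> \<Longrightarrow>
    cmod a / 2 * cmod z ^ \<delta> \<le> cmod (p z) \<and> cmod (p z) \<le> 2 * cmod a * cmod z ^ \<delta>"
    using p_bounds by blast
  define c2 where "c2 = 2 * cmod a"
  have c2: "c2 > 0" unfolding c2_def using a_nz by simp
  define thr where "thr = exp (- ln (2*K + c2 powr \<alpha> + 1) - 1)"
  define bd where "bd = min M0 thr"
  have bd: "bd > 0" "bd \<le> M0" "bd \<le> 1" "bd \<le> thr" unfolding bd_def thr_def using M0 by auto
  define zj where "zj j = fst ((skew p q ^^ j) x)" for j
  define wj where "wj j = snd ((skew p q ^^ j) x)" for j
  have lim: "(\<lambda>j. (skew p q ^^ j) x) \<longlonglongrightarrow> 0" using x unfolding basin0_def by auto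
  have zl: "zj \<longlonglongrightarrow> 0" unfolding zj_def using tendsto_fst[OF lim] by simp
  have wl: "wj \<longlonglongrightarrow> 0" unfolding wj_def using tendsto_snd[OF lim] by simp
  have nzl: "(\<lambda>j. cmod (zj j)) \<longlonglongrightarrow> 0" using zl by (simp add: tendsto_norm_zero)
  have nwl: "(\<lambda>j. cmod (wj j)) \<longlonglongrightarrow> 0" using wl by (simp add: tendsto_norm_zero)
  have "(\<lambda>j. cmod (zj j) powr \<alpha>) \<longlonglongrightarrow> 0"
    by (rule tendsto_zero_powrI[OF nzl tendsto_const]) (use alpha_pos in auto)
  hence Ml: "(\<lambda>j. max (cmod (zj j) powr \<alpha>) (cmod (wj j))) \<longlonglongrightarrow> max 0 0"
    by (intro tendsto_max nwl)
  have ev1: "\<forall>\<^sub>F j in sequentially. cmod (zj j) < \<tau>" using nzl \<tau> by (rule order_tendstoD)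
  have ev2: "\<forall>\<^sub>F j in sequentially. max (cmod (zj j) powr \<alpha>) (cmod (wj j)) < bd" using Ml bd by (intro order_tendstoD) auto
  obtain N where N: "\<And>j. j \<ge> N \<Longrightarrow> cmod (zj j) < \<tau> \<and> max (cmod (zj j) powr \<alpha>) (cmod (wj j)) < bd"
    using eventually_conj[OF ev1 ev2] unfolding eventually_sequentially by blast
  define Zs where "Zs j = cmod (zj (j + N))" for j
  define Ws where "Ws j = cmod (wj (j + N))" for j
  have zS: "zj (Suc j) = p (zj j)" for j unfolding zj_def by (rule orbit_fst_Suc)
  have wS: "wj (Suc j) = q (zj j) (wj j)" for j unfolding zj_def wj_def by (rule orbit_snd_Suc)
  have Nj: "cmod (zj (j + N)) < \<tau>" "max (Zs j powr \<alpha>) (Ws j) < bd" for j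
    using N[of "j + N"] unfolding Zs_def Ws_def by auto
  have Z1: "cmod a / 2 * Zs j ^ \<delta> \<le> Zs (Suc j)" and Z2: "Zs (Suc j) \<le> c2 * Zs j ^ \<delta>" for j
    using pb[OF Nj(1)[of j]] zS[of "j + N"] unfolding Zs_def c2_def by auto
  have Q: "Ws (Suc j) \<le> K * (Zs j * max (Zs j powr \<alpha>) (Ws j) powr (real \<delta> - 1/\<alpha>) + max (Zs j powr \<alpha>) (Ws j) powr (real \<delta> + 1))"
    if "max (Zs j powr \<alpha>) (Ws j) > 0" for j
    using QB[of "zj (j + N)" "wj (j + N)"] that Nj(2)[of j] bd wS[of "j + N"] unfolding Zs_def Ws_def by auto
  have Q0: "Ws (Suc j) = 0" if "max (Zs j powr \<alpha>) (Ws j) = 0" for j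
  proof -
    have "Zs j powr \<alpha> = 0" "Ws j = 0" using that unfolding Ws_def by (auto simp: max_def split: if_splits)
    hence "zj (j + N) = 0" "wj (j + N) = 0" unfolding Zs_def Ws_def by auto
    thus ?thesis using wS[of "j + N"] q00 unfolding Ws_def by simp
  qed
  have s1: "max (Zs j powr \<alpha>) (Ws j) \<le> 1" for j using Nj(2)[of j] bd by simp
  have s0: "max (Zs 0 powr \<alpha>) (Ws 0) \<le> exp (- ln (2*K + c2 powr \<alpha> + 1) - 1)"
    using Nj(2)[of 0] bd unfolding thr_def by simp
  have eZ: "(\<lambda>j. cmod ((p ^^ (j + N)) (fst x))) = Zs" unfolding Zs_def zj_def using orbit_fst by (auto simp: fun_eq_iff)
  have eM: "(\<lambda>j. max (cmod (fst ((skew p q ^^ (j + N)) x)) powr \<alpha>) (cmod (snd ((skew p q ^^ (j + N)) x))))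
           = (\<lambda>j. max (Zs j powr \<alpha>) (Ws j))" unfolding Zs_def Ws_def zj_def wj_def by simp
  have c1: "cmod a / 2 > 0" using a_nz by simp
  show "\<exists>g. green_seq \<delta> (\<lambda>j. cmod ((p ^^ j) (fst x))) \<longlonglongrightarrow> g \<and>
                    green_seq \<delta> (\<lambda>j. max (cmod (fst ((skew p q ^^ j) x)) powr \<alpha>)
                                          (cmod (snd ((skew p q ^^ j) x)))) \<longlonglongrightarrow> ereal \<alpha> * g"
  proof (cases "Zs 0 = 0")
    case True
    have Z0: "Zs j = 0" for j
    proof (induction j)
      case 0 thus ?case using True by simp
    next
      case (Suc j)
      have "Zs (Suc j) \<le> 0" using Z2[of j] Suc dpos by (simp add: power_0_left)
      thus ?case unfolding Zs_def by simp
    qed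
    have B: "green_seq \<delta> Zs \<longlonglongrightarrow> -\<infinity> \<and> green_seq \<delta> (\<lambda>n. max (Zs n powr \<alpha>) (Ws n)) \<longlonglongrightarrow> -\<infinity>"
      by (rule part2_caseB[OF Z0 _ c2 K alpha_pos delta_ge Q Q0 s0]) (auto simp: Ws_def)
    have l1: "green_seq \<delta> (\<lambda>j. cmod ((p ^^ j) (fst x))) \<longlonglongrightarrow> ereal (1 / real \<delta> ^ N) * -\<infinity>"
      by (rule green_shift[OF dpos]) (use B eZ in simp)
    have l2: "green_seq \<delta> (\<lambda>j. max (cmod (fst ((skew p q ^^ j) x)) powr \<alpha>) (cmod (snd ((skew p q ^^ j) x))))
        \<longlonglongrightarrow> ereal (1 / real \<delta> ^ N) * -\<infinity>"
      by (rule green_shift[OF dpos]) (use B eM in simp)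
    have e: "ereal (1 / real \<delta> ^ N) * -\<infinity> = -\<infinity>" using dpos by simp
    have e2: "ereal \<alpha> * -\<infinity> = -\<infinity>" using alpha_pos by simp
    show ?thesis using l1 l2 e e2 by (intro exI[of _ "-\<infinity>"]) simp
  next
    case False
    have Zp: "Zs j > 0" for j
    proof (induction j)
      case 0 thus ?case using False by (simp add: Zs_def)
    next
      case (Suc j)
      have "cmod a / 2 * Zs j ^ \<delta> > 0" using Suc c1 by simp
      thus ?case using Z1[of j] by linarith
    qed
    have Mp: "max (Zs n powr \<alpha>) (Ws n) > 0" for n using Zp[of n] by (simp add: less_max_iff_disj)
    have QA: "Ws (Suc n) \<le> K * (Zs n * max (Zs n powr \<alpha>) (Ws n) powr (real \<delta> - 1/\<alpha>) + max (Zs n powr \<alpha>) (Ws n) powr (real \<delta> + 1))" for n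
      using Q[OF Mp[of n]] .
    have Wn: "Ws n \<ge> 0" for n unfolding Ws_def by simp
    obtain g where gZ: "(\<lambda>n. ln (Zs n) / real \<delta> ^ n) \<longlonglongrightarrow> g"
      and gM: "(\<lambda>n. ln (max (Zs n powr \<alpha>) (Ws n)) / real \<delta> ^ n) \<longlonglongrightarrow> \<alpha> * g"
      using part2_caseA[of Zs Ws "cmod a / 2" c2 K \<alpha> \<delta>, OF Zp Wn c1 c2 K alpha_pos delta_ge Z1 Z2 QA s1 s0]
      by blast
    have gZ': "green_seq \<delta> Zs \<longlonglongrightarrow> ereal g" by (rule green_real[OF Zp dpos gZ])
    have gM': "green_seq \<delta> (\<lambda>n. max (Zs n powr \<alpha>) (Ws n)) \<longlonglongrightarrow> ereal (\<alpha> * g)"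
      by (rule green_real[OF Mp dpos gM])
    have l1: "green_seq \<delta> (\<lambda>j. cmod ((p ^^ j) (fst x))) \<longlonglongrightarrow> ereal (1 / real \<delta> ^ N) * ereal g"
      by (rule green_shift[OF dpos]) (use gZ' eZ in simp)
    have l2: "green_seq \<delta> (\<lambda>j. max (cmod (fst ((skew p q ^^ j) x)) powr \<alpha>) (cmod (snd ((skew p q ^^ j) x))))
        \<longlonglongrightarrow> ereal (1 / real \<delta> ^ N) * ereal (\<alpha> * g)"
      by (rule green_shift[OF dpos]) (use gM' eM in simp)
    have "ereal (1 / real \<delta> ^ N) * ereal (\<alpha> * g) = ereal \<alpha> * (ereal (1 / real \<delta> ^ N) * ereal g)" by simp
    thus ?thesis using l1 l2 by (intro exI[of _ "ereal (1 / real \<delta> ^ N) * ereal g"]) simp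
  qed
qed

end

theorem theorem2p19:
  fixes p :: "complex \<Rightarrow> complex" and q :: "complex \<Rightarrow> complex \<Rightarrow> complex"
    and Dz :: "complex set" and a :: complex and \<delta> :: nat
    and b :: "nat \<Rightarrow> nat \<Rightarrow> complex"
    and s k :: nat and n m :: "nat \<Rightarrow> nat"
    and \<alpha> l1 l2 :: real
  assumes dom: "Dz = UNIV \<or> (\<exists>R>0. Dz = ball 0 R \<and> closure (basin_p Dz p) \<subseteq> ball 0 R)"
    and p_hol: "p holomorphic_on Dz"
    and a_nz: "a \<noteq> 0" and delta_ge: "\<delta> \<ge> 2"
    and p_expansion: "\<exists>C \<epsilon>. \<epsilon> > 0 \<and>
          (\<forall>z. cmod z < \<epsilon> \<longrightarrow> cmod (p z - a * z ^ \<delta>) \<le> C * cmod z ^ (\<delta> + 1))"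
    and q_cont: "continuous_on (Dz \<times> UNIV) (\<lambda>(z, w). q z w)"
    and q_hol_z: "\<forall>w. (\<lambda>z. q z w) holomorphic_on Dz"
    and q_hol_w: "\<forall>z\<in>Dz. q z holomorphic_on UNIV"
    and q_series: "\<exists>\<epsilon>>0. \<forall>z w. cmod z < \<epsilon> \<and> cmod w < \<epsilon> \<longrightarrow>
          ((\<lambda>(i, j). b i j * z ^ i * w ^ j) has_sum q z w) UNIV"
    and b00: "b 0 0 = 0" and b01: "b 0 1 = 0"
    and vertices: "{(real (n i), real (m i)) | i. i \<in> {1..s}}
                     = {x. x extreme_point_of newton_polygon b}"
    and n_incr: "strict_mono_on {1..s} n"
    and m_decr: "\<forall>i\<in>{1..s}. \<forall>j\<in>{1..s}. i < j \<longrightarrow> m j < m i"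
    and case4: "s > 2" "2 \<le> k" "k \<le> s - 1"
       "intercept n m k \<le> real \<delta>" "real \<delta> \<le> intercept n m (k - 1)"
    and alpha_def: "\<alpha> = real (n k) / (real \<delta> - real (m k))"
    and l1_def: "l1 = (real (n k) - real (n (k - 1))) / (real (m (k - 1)) - real (m k))"
    and l12_def: "l1 + l2 = (real (n (k + 1)) - real (n k)) / (real (m k) - real (m (k + 1)))"
  shows "(\<exists>r0>0. \<forall>r. 0 < r \<and> r < r0 \<longrightarrow>
            ((m k \<ge> 2 \<or> (intercept n m k < real \<delta> \<and> real \<delta> < intercept n m (k - 1))) \<longrightarrow>
             (\<forall>(z, w) \<in> Af Dz (skew p q) (Uset l1 l2 r).
                \<exists>g. green_seq \<delta> (\<lambda>j. cmod ((p ^^ j) z)) \<longlonglongrightarrow> g \<and>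
                    green_seq \<delta> (\<lambda>j. cmod (snd ((skew p q ^^ j) (z, w)))) \<longlonglongrightarrow> ereal \<alpha> * g)))
       \<and> ((n 1, m 1) \<noteq> (0, \<delta>) \<longrightarrow>
            (\<forall>x \<in> basin0 Dz (skew p q).
                \<exists>g. green_seq \<delta> (\<lambda>j. cmod ((p ^^ j) (fst x))) \<longlonglongrightarrow> g \<and>
                    green_seq \<delta> (\<lambda>j. max (cmod (fst ((skew p q ^^ j) x)) powr \<alpha>)
                                          (cmod (snd ((skew p q ^^ j) x)))) \<longlonglongrightarrow> ereal \<alpha> * g))"
proof -
  interpret S: setting b s n m p q a \<delta> k \<alpha> l1 l2
  proof (unfold_locales)
    show "{(real (n i), real (m i)) | i. i \<in> {1..s}} = {x. x extreme_point_of newton_polygon b}" by (rule vertices)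
    show "strict_mono_on {1..s} n" by (rule n_incr)
    show "\<forall>i\<in>{1..s}. \<forall>j\<in>{1..s}. i < j \<longrightarrow> m j < m i" by (rule m_decr)
  qed (use a_nz delta_ge p_expansion q_series b00 case4 alpha_def l1_def l12_def in auto)
  have P1: "\<exists>r0>0. \<forall>r. 0 < r \<and> r < r0 \<longrightarrow>
            ((m k \<ge> 2 \<or> (intercept n m k < real \<delta> \<and> real \<delta> < intercept n m (k - 1))) \<longrightarrow>
             (\<forall>(z, w) \<in> Af Dz (skew p q) (Uset l1 l2 r).
                \<exists>g. green_seq \<delta> (\<lambda>j. cmod ((p ^^ j) z)) \<longlonglongrightarrow> g \<and>
                    green_seq \<delta> (\<lambda>j. cmod (snd ((skew p q ^^ j) (z, w)))) \<longlonglongrightarrow> ereal \<alpha> * g))"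
  proof (cases "m k \<ge> 2 \<or> (intercept n m k < real \<delta> \<and> real \<delta> < intercept n m (k - 1))")
    case True
    then obtain r0 where "r0 > 0" and r0: "\<forall>r. 0 < r \<and> r < r0 \<longrightarrow>
             (\<forall>(z, w) \<in> Af Dz (skew p q) (Uset l1 l2 r).
                \<exists>g. green_seq \<delta> (\<lambda>j. cmod ((p ^^ j) z)) \<longlonglongrightarrow> g \<and>
                    green_seq \<delta> (\<lambda>j. cmod (snd ((skew p q ^^ j) (z, w)))) \<longlonglongrightarrow> ereal \<alpha> * g)"
      using S.part1[of Dz] by blast
    thus ?thesis by blast
  next
    case False
    thus ?thesis by (intro exI[of _ 1]) auto
  qed
  have P2: "(n 1, m 1) \<noteq> (0, \<delta>) \<longrightarrow>
            (\<forall>x \<in> basin0 Dz (skew p q).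
                \<exists>g. green_seq \<delta> (\<lambda>j. cmod ((p ^^ j) (fst x))) \<longlonglongrightarrow> g \<and>
                    green_seq \<delta> (\<lambda>j. max (cmod (fst ((skew p q ^^ j) x)) powr \<alpha>)
                                          (cmod (snd ((skew p q ^^ j) x)))) \<longlonglongrightarrow> ereal \<alpha> * g)"
    using S.part2 by blast
  show ?thesis using P1 P2 by blast
qed

end
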